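(* Let $\{\Gamma_c\}_{c\in(0,1)}$ be a family of admissible policies with almost surely finite stopping times $\tau$ such that $\alpha_j(\Gamma_c)=O(-c\log c)$ as $c\to0$ for all $j=1,\dots,M$. Let $0<\epsilon<1$. Then for every $m=1,\dots,M$, $$\mathbf P_m\big(\Delta S_m(\tau)<-(1-\epsilon)\log c\,\big|\,\Gamma_c\big)=O(-c^{\epsilon}\log c)\qquad(c\to0).$$
   Context: Model. Fix integers $M\ge2$, $1\le K\le M$. There are $M$ cells, exactly one containing a target; $H_m$: the target is in cell $m$. $f,g$ are probability densities w.r.t. a common measure with $0<D(g\|f),D(f\|g)<\infty$ ($D(p\|q)=\int p\log(p/q)$). At each time $n$ a set $\phi(n)$ of $K$ distinct cells is selected and an observation $y_k(n)$ is obtained from each $k\in\phi(n)$; under $H_m$ observations are independent with law $g$ from cell $m$ and $f$ from other cells. An admissible policy: a (possibly randomized) history-dependent selection rule, a stopping time $\tau$, and decision $\delta\in\{1,\dots,M\}$. $\mathbf P_m$: probability under $H_m$; $\alpha_m(\Gamma)=\mathbf P_m(\delta\ne m)$. Notation. $\ell_k(n)=\log\frac{g(y_k(n))}{f(y_k(n))}$, $\mathbf 1_k(n)$ indicates cell $k$ is observed at time $n$, $S_k(n)=\sum_{t\le n}\ell_k(t)\mathbf1_k(t)$, and $\Delta S_m(n)=\min_{j\ne m}\big(S_m(n)-S_j(n)\big)$. *)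

theory Defs
  imports "HOL-Probability.Probability" "HOL-Library.Landau_Symbols"
begin

text \<open>Cells are 1..M, times are 1,2,...
  The observation that would be obtained from cell k at time t is Y (t,k);
  under H_m all Y (t,k) are independent, with density g if k = m and f otherwise.
  A (possibly randomized) policy uses an independent randomization r (law R)
  and the history of observed values only.\<close>

type_synonym 'a obs = "nat \<times> nat \<Rightarrow> 'a"
type_synonym 'a hist = "(nat \<Rightarrow> 'a option) list"

record ('r, 'a) policy =
  sel :: "'r \<Rightarrow> 'a hist \<Rightarrow> nat set"
  stp :: "'r \<Rightarrow> 'a hist \<Rightarrow> bool"
  dec :: "'r \<Rightarrow> 'a hist \<Rightarrow> nat"

definition obs_at :: "nat set \<Rightarrow> 'a obs \<Rightarrow> nat \<Rightarrow> nat \<Rightarrow> 'a option" where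
  "obs_at S Y t = (\<lambda>k. if k \<in> S then Some (Y (t, k)) else None)"

fun hist :: "('r, 'a) policy \<Rightarrow> 'r \<Rightarrow> 'a obs \<Rightarrow> nat \<Rightarrow> 'a hist" where
  "hist P r Y 0 = []"
| "hist P r Y (Suc n) = hist P r Y n @ [obs_at (sel P r (hist P r Y n)) Y (Suc n)]"

definition phi :: "('r, 'a) policy \<Rightarrow> 'r \<Rightarrow> 'a obs \<Rightarrow> nat \<Rightarrow> nat set" where
  "phi P r Y t = sel P r (hist P r Y (t - 1))"

definition llr :: "('a \<Rightarrow> real) \<Rightarrow> ('a \<Rightarrow> real) \<Rightarrow> 'a \<Rightarrow> real" where
  "llr f g y = ln (g y / f y)"

definition Ssum :: "('a \<Rightarrow> real) \<Rightarrow> ('a \<Rightarrow> real) \<Rightarrow> ('r, 'a) policy \<Rightarrow> 'r \<Rightarrow> 'a obs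
    \<Rightarrow> nat \<Rightarrow> nat \<Rightarrow> real" where
  "Ssum f g P r Y k n = (\<Sum>t\<in>{1..n}. if k \<in> phi P r Y t then llr f g (Y (t, k)) else 0)"

definition DeltaS :: "nat \<Rightarrow> ('a \<Rightarrow> real) \<Rightarrow> ('a \<Rightarrow> real) \<Rightarrow> ('r, 'a) policy \<Rightarrow> 'r \<Rightarrow> 'a obs
    \<Rightarrow> nat \<Rightarrow> nat \<Rightarrow> real" where
  "DeltaS M f g P r Y m n =
     Min ((\<lambda>j. Ssum f g P r Y m n - Ssum f g P r Y j n) ` ({1..M} - {m}))"

definition stops :: "('r, 'a) policy \<Rightarrow> 'r \<Rightarrow> 'a obs \<Rightarrow> bool" where
  "stops P r Y = (\<exists>n. stp P r (hist P r Y n))"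

text \<open>Stopping time tau (meaningful when stops holds).\<close>
definition tau :: "('r, 'a) policy \<Rightarrow> 'r \<Rightarrow> 'a obs \<Rightarrow> nat" where
  "tau P r Y = (LEAST n. stp P r (hist P r Y n))"

definition decision :: "('r, 'a) policy \<Rightarrow> 'r \<Rightarrow> 'a obs \<Rightarrow> nat" where
  "decision P r Y = dec P r (hist P r Y (tau P r Y))"

definition hyp_space :: "'r measure \<Rightarrow> 'a measure \<Rightarrow> ('a \<Rightarrow> real) \<Rightarrow> ('a \<Rightarrow> real) \<Rightarrow> nat
    \<Rightarrow> ('r \<times> 'a obs) measure" where
  "hyp_space R \<mu> f g m =
     R \<Otimes>\<^sub>M (\<Pi>\<^sub>M i\<in>(UNIV :: (nat \<times> nat) set).
               density \<mu> (\<lambda>x. ennreal (if snd i = m then g x else f x)))"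

definition err_prob :: "'r measure \<Rightarrow> 'a measure \<Rightarrow> ('a \<Rightarrow> real) \<Rightarrow> ('a \<Rightarrow> real)
    \<Rightarrow> ('r, 'a) policy \<Rightarrow> nat \<Rightarrow> real" where
  "err_prob R \<mu> f g P m =
     measure (hyp_space R \<mu> f g m)
       {\<omega> \<in> space (hyp_space R \<mu> f g m). decision P (fst \<omega>) (snd \<omega>) \<noteq> m}"

definition admissible :: "nat \<Rightarrow> nat \<Rightarrow> 'r measure \<Rightarrow> 'a measure \<Rightarrow> ('a \<Rightarrow> real)
    \<Rightarrow> ('a \<Rightarrow> real) \<Rightarrow> ('r, 'a) policy \<Rightarrow> bool" where
  "admissible M K R \<mu> f g P \<longleftrightarrow>
     (\<forall>r h. sel P r h \<subseteq> {1..M} \<and> card (sel P r h) = K) \<and>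
     (\<forall>r h. dec P r h \<in> {1..M}) \<and>
     (\<forall>j\<in>{1..M}. \<forall>n.
        (\<lambda>\<omega>. sel P (fst \<omega>) (hist P (fst \<omega>) (snd \<omega>) n))
           \<in> hyp_space R \<mu> f g j \<rightarrow>\<^sub>M count_space UNIV \<and>
        (\<lambda>\<omega>. stp P (fst \<omega>) (hist P (fst \<omega>) (snd \<omega>) n))
           \<in> hyp_space R \<mu> f g j \<rightarrow>\<^sub>M count_space UNIV \<and>
        (\<lambda>\<omega>. dec P (fst \<omega>) (hist P (fst \<omega>) (snd \<omega>) n))
           \<in> hyp_space R \<mu> f g j \<rightarrow>\<^sub>M count_space UNIV)"

end

theory Submission
  imports Defs
begin



definition dens :: "('a \<Rightarrow> real) \<Rightarrow> ('a \<Rightarrow> real) \<Rightarrow> bool \<Rightarrow> 'a \<Rightarrow> real" where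
  "dens f g b x = (if b then g x else f x)"

definition CL :: "'a measure \<Rightarrow> ('a\<Rightarrow>real) \<Rightarrow> ('a\<Rightarrow>real) \<Rightarrow> (nat\<times>nat \<Rightarrow> bool) \<Rightarrow> nat\<times>nat \<Rightarrow> 'a measure" where
  "CL \<mu> f g \<sigma> i = density \<mu> (\<lambda>x. ennreal (dens f g (\<sigma> i) x))"

definition Om :: "'r measure \<Rightarrow> 'a measure \<Rightarrow> ('a\<Rightarrow>real) \<Rightarrow> ('a\<Rightarrow>real) \<Rightarrow> (nat\<times>nat \<Rightarrow> bool) \<Rightarrow> ('r \<times> 'a obs) measure" where
  "Om R \<mu> f g \<sigma> = R \<Otimes>\<^sub>M (\<Pi>\<^sub>M i\<in>UNIV. CL \<mu> f g \<sigma> i)"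

lemma hyp_space_Om: "hyp_space R \<mu> f g m = Om R \<mu> f g (\<lambda>i. snd i = m)"
  unfolding hyp_space_def Om_def CL_def dens_def by simp

locale FG =
  fixes \<mu> :: "'a measure" and f g :: "'a \<Rightarrow> real" and R :: "'r measure"
  assumes fm[measurable]: "f \<in> borel_measurable \<mu>" and gm[measurable]: "g \<in> borel_measurable \<mu>"
    and fnn: "\<forall>x\<in>space \<mu>. 0 \<le> f x" and gnn: "\<forall>x\<in>space \<mu>. 0 \<le> g x"
    and fp: "prob_space (density \<mu> (\<lambda>x. ennreal (f x)))"
    and gp: "prob_space (density \<mu> (\<lambda>x. ennreal (g x)))"
    and fg0: "AE x in \<mu>. (f x = 0 \<longleftrightarrow> g x = 0)"
    and Rp: "prob_space R"
begin

lemma dens_meas[measurable]: "dens f g b \<in> borel_measurable \<mu>"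
  unfolding dens_def by (cases b) auto

lemma dens_nn: "x \<in> space \<mu> \<Longrightarrow> 0 \<le> dens f g b x"
  using fnn gnn unfolding dens_def by auto

lemma CL_prob: "prob_space (CL \<mu> f g \<sigma> i)"
  unfolding CL_def dens_def using fp gp by (cases "\<sigma> i") auto

lemma sets_CL[simp, measurable_cong]: "sets (CL \<mu> f g \<sigma> i) = sets \<mu>"
  unfolding CL_def by simp

lemma space_CL[simp]: "space (CL \<mu> f g \<sigma> i) = space \<mu>"
  unfolding CL_def by simp

lemma PiM_prob: "prob_space (\<Pi>\<^sub>M i\<in>I. CL \<mu> f g \<sigma> i)"
  by (intro prob_space_PiM CL_prob)

lemma sets_PiCL: "sets (\<Pi>\<^sub>M i\<in>I. CL \<mu> f g \<sigma> i) = sets (\<Pi>\<^sub>M i\<in>I. CL \<mu> f g \<sigma>' i)"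
  by (intro sets_PiM_cong) auto

lemma sets_Om: "sets (Om R \<mu> f g \<sigma>) = sets (Om R \<mu> f g \<sigma>')"
  unfolding Om_def by (intro sets_pair_measure_cong sets_PiCL refl)

lemma space_Om: "space (Om R \<mu> f g \<sigma>) = space (Om R \<mu> f g \<sigma>')"
  using sets_Om sets_eq_imp_space_eq by blast

lemma meas_Om: "h \<in> borel_measurable (Om R \<mu> f g \<sigma>) \<Longrightarrow> h \<in> borel_measurable (Om R \<mu> f g \<sigma>')"
  using measurable_cong_sets[OF sets_Om refl] by blast

lemma decomp:
  assumes Psi: "Psi \<in> borel_measurable (Om R \<mu> f g \<sigma>)"
  shows "(\<integral>\<^sup>+\<omega>. Psi \<omega> \<partial>Om R \<mu> f g \<sigma>) =
     (\<integral>\<^sup>+r. \<integral>\<^sup>+x. \<integral>\<^sup>+X. Psi (r, X(i0:=x)) \<partial>(\<Pi>\<^sub>M i\<in>UNIV-{i0}. CL \<mu> f g \<sigma> i) \<partial>CL \<mu> f g \<sigma> i0 \<partial>R)"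
proof -
  let ?N = "CL \<mu> f g \<sigma>"
  let ?P = "\<Pi>\<^sub>M i\<in>UNIV. ?N i"
  let ?PI = "\<Pi>\<^sub>M i\<in>UNIV-{i0}. ?N i"
  interpret P: prob_space ?P by (rule PiM_prob)
  interpret PI: prob_space ?PI by (rule PiM_prob)
  interpret N0: prob_space "?N i0" by (rule CL_prob)
  interpret PP: pair_sigma_finite "?N i0" ?PI ..
  have ins: "insert i0 (UNIV - {i0}) = UNIV" by auto
  have D: "distr (?N i0 \<Otimes>\<^sub>M ?PI) ?P (\<lambda>(x, X). X(i0 := x)) = ?P"
    using distr_pair_PiM_eq_PiM[of "UNIV-{i0}" ?N i0, OF CL_prob CL_prob] unfolding ins .
  have Pm: "Psi \<in> borel_measurable (R \<Otimes>\<^sub>M ?P)" using Psi unfolding Om_def .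
  have mT: "(\<lambda>(x, X). X(i0 := x)) \<in> measurable (?N i0 \<Otimes>\<^sub>M ?PI) ?P"
  proof -
    have "(\<lambda>(x, X). X(i0 := x)) \<in> measurable (?N i0 \<Otimes>\<^sub>M ?PI) (\<Pi>\<^sub>M i\<in>insert i0 (UNIV-{i0}). ?N i)"
      by measurable
    then show ?thesis unfolding ins .
  qed
  have "(\<integral>\<^sup>+\<omega>. Psi \<omega> \<partial>Om R \<mu> f g \<sigma>) = (\<integral>\<^sup>+r. \<integral>\<^sup>+Y. Psi (r, Y) \<partial>?P \<partial>R)"
    unfolding Om_def using P.nn_integral_fst[OF Pm] by simp
  also have "\<dots> = (\<integral>\<^sup>+r. \<integral>\<^sup>+p. Psi (r, (case p of (x, X) \<Rightarrow> X(i0 := x))) \<partial>(?N i0 \<Otimes>\<^sub>M ?PI) \<partial>R)"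
  proof (rule nn_integral_cong)
    fix r assume r: "r \<in> space R"
    have m1: "(\<lambda>Y. Psi (r, Y)) \<in> borel_measurable ?P"
      using Pm r by measurable
    show "(\<integral>\<^sup>+Y. Psi (r, Y) \<partial>?P) = (\<integral>\<^sup>+p. Psi (r, (case p of (x, X) \<Rightarrow> X(i0 := x))) \<partial>(?N i0 \<Otimes>\<^sub>M ?PI))"
      apply (subst D[symmetric])
      apply (subst nn_integral_distr[OF mT])
      using m1 D apply simp
      by simp
  qed
  also have "\<dots> = (\<integral>\<^sup>+r. \<integral>\<^sup>+x. \<integral>\<^sup>+X. Psi (r, X(i0:=x)) \<partial>?PI \<partial>?N i0 \<partial>R)"
  proof (rule nn_integral_cong)
    fix r assume r: "r \<in> space R"
    have m2: "(\<lambda>p. Psi (r, (case p of (x, X) \<Rightarrow> X(i0 := x)))) \<in> borel_measurable (?N i0 \<Otimes>\<^sub>M ?PI)"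
      using Pm r mT by measurable
    show "(\<integral>\<^sup>+p. Psi (r, (case p of (x, X) \<Rightarrow> X(i0 := x))) \<partial>(?N i0 \<Otimes>\<^sub>M ?PI)) = (\<integral>\<^sup>+x. \<integral>\<^sup>+X. Psi (r, X(i0:=x)) \<partial>?PI \<partial>?N i0)"
      using PI.nn_integral_fst[OF m2] by simp
  qed
  finally show ?thesis .
qed


lemma dens_change:
  assumes F[measurable]: "F \<in> borel_measurable \<mu>"
  shows "(\<integral>\<^sup>+x. F x \<partial>density \<mu> (\<lambda>x. ennreal (dens f g b x))) =
         (\<integral>\<^sup>+x. ennreal (dens f g b x / dens f g a x) * F x \<partial>density \<mu> (\<lambda>x. ennreal (dens f g a x)))"
proof -
  have "(\<integral>\<^sup>+x. F x \<partial>density \<mu> (\<lambda>x. ennreal (dens f g b x))) = (\<integral>\<^sup>+x. ennreal (dens f g b x) * F x \<partial>\<mu>)"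
    by (rule nn_integral_density) auto
  also have "\<dots> = (\<integral>\<^sup>+x. ennreal (dens f g a x) * (ennreal (dens f g b x / dens f g a x) * F x) \<partial>\<mu>)"
  proof (rule nn_integral_cong_AE)
    show "AE x in \<mu>. ennreal (dens f g b x) * F x = ennreal (dens f g a x) * (ennreal (dens f g b x / dens f g a x) * F x)"
      using fg0 AE_space
    proof eventually_elim
      case (elim x)
      have "dens f g b x = dens f g a x * (dens f g b x / dens f g a x)"
        using elim unfolding dens_def by auto
      moreover have "0 \<le> dens f g a x" "0 \<le> dens f g b x / dens f g a x"
        using dens_nn[OF elim(2)] by auto
      ultimately show ?case
        by (metis ennreal_mult mult.assoc)
    qed
  qed
  also have "\<dots> = (\<integral>\<^sup>+x. ennreal (dens f g b x / dens f g a x) * F x \<partial>density \<mu> (\<lambda>x. ennreal (dens f g a x)))"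
    by (rule nn_integral_density[symmetric]) auto
  finally show ?thesis .
qed


lemma inner_meas:
  assumes Psi: "Psi \<in> borel_measurable (Om R \<mu> f g \<sigma>)" and r: "r \<in> space R"
  shows "(\<lambda>x. \<integral>\<^sup>+X. Psi (r, X(i0:=x)) \<partial>(\<Pi>\<^sub>M i\<in>UNIV-{i0}. CL \<mu> f g \<sigma>' i)) \<in> borel_measurable \<mu>"
proof -
  let ?N = "CL \<mu> f g \<sigma>"
  let ?PI = "\<Pi>\<^sub>M i\<in>UNIV-{i0}. CL \<mu> f g \<sigma>' i"
  interpret PI: prob_space ?PI by (rule PiM_prob)
  have ins: "insert i0 (UNIV - {i0}) = UNIV" by auto
  have Pm: "Psi \<in> borel_measurable (R \<Otimes>\<^sub>M (\<Pi>\<^sub>M i\<in>UNIV. ?N i))" using Psi unfolding Om_def .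
  have mT: "(\<lambda>(x, X). X(i0 := x)) \<in> measurable (?N i0 \<Otimes>\<^sub>M ?PI) (\<Pi>\<^sub>M i\<in>UNIV. ?N i)"
  proof -
    have "(\<lambda>(x, X). X(i0 := x)) \<in> measurable (?N i0 \<Otimes>\<^sub>M (\<Pi>\<^sub>M i\<in>UNIV-{i0}. ?N i)) (\<Pi>\<^sub>M i\<in>insert i0 (UNIV-{i0}). ?N i)"
      by measurable
    moreover have eqs: "sets (?N i0 \<Otimes>\<^sub>M (\<Pi>\<^sub>M i\<in>UNIV-{i0}. ?N i)) = sets (?N i0 \<Otimes>\<^sub>M ?PI)"
      by (intro sets_pair_measure_cong refl sets_PiCL)
    ultimately show ?thesis unfolding ins using measurable_cong_sets[OF eqs refl] by simp
  qed
  have m2: "(\<lambda>p. Psi (r, (case p of (x, X) \<Rightarrow> X(i0 := x)))) \<in> borel_measurable (?N i0 \<Otimes>\<^sub>M ?PI)"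
    using Pm r mT by measurable
  have "(\<lambda>x. \<integral>\<^sup>+X. Psi (r, X(i0:=x)) \<partial>?PI) \<in> borel_measurable (?N i0)"
    using PI.borel_measurable_nn_integral_fst[OF m2] by simp
  then show ?thesis by (subst (asm) measurable_cong_sets[OF sets_CL refl])
qed

lemma upd_meas:
  assumes x: "x \<in> space \<mu>"
  shows "(\<lambda>X. X(i0:=x)) \<in> measurable (\<Pi>\<^sub>M i\<in>UNIV-{i0}. CL \<mu> f g \<sigma> i) (\<Pi>\<^sub>M i\<in>UNIV. CL \<mu> f g \<sigma>' i)"
proof -
  have m: "(\<lambda>X. (id X)(i0 := x)) \<in> measurable (\<Pi>\<^sub>M i\<in>UNIV-{i0}. CL \<mu> f g \<sigma> i) (\<Pi>\<^sub>M i\<in>UNIV. CL \<mu> f g \<sigma> i)"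
    by (rule measurable_fun_upd[where J="UNIV-{i0}"]) (auto simp: x)
  have e: "measurable (\<Pi>\<^sub>M i\<in>UNIV-{i0}. CL \<mu> f g \<sigma> i) (\<Pi>\<^sub>M i\<in>UNIV. CL \<mu> f g \<sigma>' i) =
      measurable (\<Pi>\<^sub>M i\<in>UNIV-{i0}. CL \<mu> f g \<sigma> i) (\<Pi>\<^sub>M i\<in>UNIV. CL \<mu> f g \<sigma> i)"
    by (rule measurable_cong_sets[OF refl sets_PiCL])
  show ?thesis using m e by simp
qed

lemma upd_meas2:
  assumes Psi: "Psi \<in> borel_measurable (Om R \<mu> f g \<sigma>)" and x: "x \<in> space \<mu>" and r: "r \<in> space R"
  shows "(\<lambda>X. Psi (r, X(i0:=x))) \<in> borel_measurable (\<Pi>\<^sub>M i\<in>UNIV-{i0}. CL \<mu> f g \<sigma>' i)"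
proof -
  have "(\<lambda>X. (r, X(i0:=x))) \<in> measurable (\<Pi>\<^sub>M i\<in>UNIV-{i0}. CL \<mu> f g \<sigma>' i) (Om R \<mu> f g \<sigma>)"
    unfolding Om_def by (rule measurable_Pair[OF measurable_const[OF r] upd_meas[OF x]])
  then show ?thesis using Psi by (rule measurable_compose)
qed

lemma change_coord:
  assumes Psi: "Psi \<in> borel_measurable (Om R \<mu> f g \<sigma>)"
  shows "(\<integral>\<^sup>+\<omega>. Psi \<omega> \<partial>Om R \<mu> f g (\<sigma>(i0:=b))) =
    (\<integral>\<^sup>+\<omega>. Psi \<omega> * ennreal (dens f g b (snd \<omega> i0) / dens f g (\<sigma> i0) (snd \<omega> i0)) \<partial>Om R \<mu> f g \<sigma>)"
proof -
  let ?\<sigma>' = "\<sigma>(i0:=b)"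
  let ?PI = "\<Pi>\<^sub>M i\<in>UNIV-{i0}. CL \<mu> f g \<sigma> i"
  let ?H = "\<lambda>r x. \<integral>\<^sup>+X. Psi (r, X(i0:=x)) \<partial>?PI"
  have PIeq: "(\<Pi>\<^sub>M i\<in>UNIV-{i0}. CL \<mu> f g ?\<sigma>' i) = ?PI"
    by (intro PiM_cong) (auto simp: CL_def)
  have "(\<integral>\<^sup>+\<omega>. Psi \<omega> \<partial>Om R \<mu> f g ?\<sigma>') = (\<integral>\<^sup>+r. \<integral>\<^sup>+x. ?H r x \<partial>CL \<mu> f g ?\<sigma>' i0 \<partial>R)"
    using decomp[OF meas_Om[OF Psi], of ?\<sigma>' i0] unfolding PIeq .
  also have "\<dots> = (\<integral>\<^sup>+r. \<integral>\<^sup>+x. ennreal (dens f g b x / dens f g (\<sigma> i0) x) * ?H r x \<partial>CL \<mu> f g \<sigma> i0 \<partial>R)"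
  proof (rule nn_integral_cong)
    fix r assume r: "r \<in> space R"
    show "(\<integral>\<^sup>+x. ?H r x \<partial>CL \<mu> f g ?\<sigma>' i0) = (\<integral>\<^sup>+x. ennreal (dens f g b x / dens f g (\<sigma> i0) x) * ?H r x \<partial>CL \<mu> f g \<sigma> i0)"
    proof -
      have c1: "CL \<mu> f g ?\<sigma>' i0 = density \<mu> (\<lambda>x. ennreal (dens f g b x))" by (simp add: CL_def)
      have c2: "CL \<mu> f g \<sigma> i0 = density \<mu> (\<lambda>x. ennreal (dens f g (\<sigma> i0) x))" by (simp add: CL_def)
      show ?thesis unfolding c1 c2 by (rule dens_change[OF inner_meas[OF Psi r]])
    qed
  qed
  also have "\<dots> = (\<integral>\<^sup>+\<omega>. Psi \<omega> * ennreal (dens f g b (snd \<omega> i0) / dens f g (\<sigma> i0) (snd \<omega> i0)) \<partial>Om R \<mu> f g \<sigma>)"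
  proof -
    have m: "(\<lambda>\<omega>. Psi \<omega> * ennreal (dens f g b (snd \<omega> i0) / dens f g (\<sigma> i0) (snd \<omega> i0))) \<in> borel_measurable (Om R \<mu> f g \<sigma>)"
      using Psi unfolding Om_def by measurable
    show ?thesis
    proof (subst decomp[OF m, of i0], intro nn_integral_cong)
      fix r x assume r: "r \<in> space R" and x: "x \<in> space (CL \<mu> f g \<sigma> i0)"
      have "(\<integral>\<^sup>+X. Psi (r, X(i0:=x)) * ennreal (dens f g b x / dens f g (\<sigma> i0) x) \<partial>?PI)
          = ?H r x * ennreal (dens f g b x / dens f g (\<sigma> i0) x)"
        using upd_meas2[OF Psi _ r] x by (intro nn_integral_multc) simp
      then show "ennreal (dens f g b x / dens f g (\<sigma> i0) x) * ?H r x =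
         (\<integral>\<^sup>+X. Psi (r, X(i0:=x)) * ennreal (dens f g b (snd (r, X(i0:=x)) i0) / dens f g (\<sigma> i0) (snd (r, X(i0:=x)) i0)) \<partial>?PI)"
        by (simp add: mult.commute)
    qed
  qed
  finally show ?thesis .
qed

lemma integrate_out:
  assumes Phi: "Phi \<in> borel_measurable (Om R \<mu> f g \<sigma>)"
    and inv: "\<And>r Y x. Phi (r, Y(i0:=x)) = Phi (r, Y)"
    and q: "q \<in> borel_measurable \<mu>"
    and q1: "(\<integral>\<^sup>+x. q x \<partial>CL \<mu> f g \<sigma> i0) = 1"
  shows "(\<integral>\<^sup>+\<omega>. Phi \<omega> * q (snd \<omega> i0) \<partial>Om R \<mu> f g \<sigma>) = (\<integral>\<^sup>+\<omega>. Phi \<omega> \<partial>Om R \<mu> f g \<sigma>)"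
proof -
  let ?PI = "\<Pi>\<^sub>M i\<in>UNIV-{i0}. CL \<mu> f g \<sigma> i"
  interpret N0: prob_space "CL \<mu> f g \<sigma> i0" by (rule CL_prob)
  have m: "(\<lambda>\<omega>. Phi \<omega> * q (snd \<omega> i0)) \<in> borel_measurable (Om R \<mu> f g \<sigma>)"
    using Phi q unfolding Om_def by measurable
  have qm: "q \<in> borel_measurable (CL \<mu> f g \<sigma> i0)" using q by (subst measurable_cong_sets[OF sets_CL refl])
  have "(\<integral>\<^sup>+\<omega>. Phi \<omega> * q (snd \<omega> i0) \<partial>Om R \<mu> f g \<sigma>) =
     (\<integral>\<^sup>+r. \<integral>\<^sup>+x. \<integral>\<^sup>+X. Phi (r, X(i0:=x)) * q x \<partial>?PI \<partial>CL \<mu> f g \<sigma> i0 \<partial>R)"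
    by (subst decomp[OF m, of i0]) simp
  also have "\<dots> = (\<integral>\<^sup>+r. \<integral>\<^sup>+x. q x * (\<integral>\<^sup>+X. Phi (r, X(i0:=x)) \<partial>?PI) \<partial>CL \<mu> f g \<sigma> i0 \<partial>R)"
  proof (intro nn_integral_cong)
    fix r x assume r: "r \<in> space R" and x: "x \<in> space (CL \<mu> f g \<sigma> i0)"
    show "(\<integral>\<^sup>+X. Phi (r, X(i0:=x)) * q x \<partial>?PI) = q x * (\<integral>\<^sup>+X. Phi (r, X(i0:=x)) \<partial>?PI)"
      using upd_meas2[OF Phi _ r] x by (subst nn_integral_multc) (auto simp: mult.commute)
  qed
  also have "\<dots> = (\<integral>\<^sup>+r. \<integral>\<^sup>+x. q x * (\<integral>\<^sup>+X. Phi (r, X) \<partial>?PI) \<partial>CL \<mu> f g \<sigma> i0 \<partial>R)"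
    by (simp only: inv)
  also have "\<dots> = (\<integral>\<^sup>+r. (\<integral>\<^sup>+x. q x \<partial>CL \<mu> f g \<sigma> i0) * (\<integral>\<^sup>+X. Phi (r, X) \<partial>?PI) \<partial>R)"
    by (intro nn_integral_cong nn_integral_multc qm)
  also have "\<dots> = (\<integral>\<^sup>+r. (\<integral>\<^sup>+x. 1 \<partial>CL \<mu> f g \<sigma> i0) * (\<integral>\<^sup>+X. Phi (r, X) \<partial>?PI) \<partial>R)"
    by (simp only: q1 N0.emeasure_space_1 nn_integral_const mult_1)
  also have "\<dots> = (\<integral>\<^sup>+r. \<integral>\<^sup>+x. 1 * (\<integral>\<^sup>+X. Phi (r, X) \<partial>?PI) \<partial>CL \<mu> f g \<sigma> i0 \<partial>R)"
    by (intro nn_integral_cong nn_integral_multc[symmetric]) simp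
  also have "\<dots> = (\<integral>\<^sup>+r. \<integral>\<^sup>+x. \<integral>\<^sup>+X. Phi (r, X(i0:=x)) \<partial>?PI \<partial>CL \<mu> f g \<sigma> i0 \<partial>R)"
    by (simp only: inv mult_1)
  also have "\<dots> = (\<integral>\<^sup>+\<omega>. Phi \<omega> \<partial>Om R \<mu> f g \<sigma>)"
    by (rule decomp[OF Phi, of i0, symmetric])
  finally show ?thesis .
qed

end



lemma length_hist[simp]: "length (hist P r Y n) = n"
  by (induction n) auto

lemma hist_take: "k \<le> n \<Longrightarrow> hist P r Y k = take k (hist P r Y n)"
proof (induction n)
  case 0 then show ?case by simp
next
  case (Suc n)
  show ?case
  proof (cases "k = Suc n")
    case True then show ?thesis by simp
  next
    case False then have "k \<le> n" using Suc by simp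
    then show ?thesis using Suc by simp
  qed
qed

lemma hist_eq_le: "hist P r Y n = hist P r Y' n \<Longrightarrow> k \<le> n \<Longrightarrow> hist P r Y k = hist P r Y' k"
proof -
  assume "hist P r Y n = hist P r Y' n" "k \<le> n"
  then show ?thesis using hist_take[of k n P r Y] hist_take[of k n P r Y'] by simp
qed

lemma hist_nth: "t < n \<Longrightarrow> hist P r Y n ! t = obs_at (sel P r (hist P r Y t)) Y (Suc t)"
proof (induction n)
  case 0 then show ?case by simp
next
  case (Suc n)
  then show ?case by (cases "t = n") (auto simp: nth_append)
qed

lemma hist_local: "(\<And>i. fst i \<in> {1..s} \<Longrightarrow> Y i = Y' i) \<Longrightarrow> hist P r Y s = hist P r Y' s"
proof (induction s)
  case 0 then show ?case by simp
next
  case (Suc s)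
  then have IH: "hist P r Y s = hist P r Y' s" by auto
  have "obs_at (sel P r (hist P r Y s)) Y (Suc s) = obs_at (sel P r (hist P r Y' s)) Y' (Suc s)"
    unfolding IH obs_at_def using Suc.prems by (auto simp: fun_eq_iff)
  then show ?case using IH by simp
qed

lemma hist_unobs:
  assumes "c \<notin> phi P r Y t"
  shows "hist P r (Y((t,c):=x)) s = hist P r Y s"
proof (induction s)
  case 0 then show ?case by simp
next
  case (Suc s)
  have "obs_at (sel P r (hist P r Y s)) (Y((t,c):=x)) (Suc s) = obs_at (sel P r (hist P r Y s)) Y (Suc s)"
  proof -
    have "(Y((t,c):=x)) (Suc s, k) = Y (Suc s, k)" if "k \<in> sel P r (hist P r Y s)" for k
    proof (cases "t = Suc s \<and> k = c")
      case True
      then have "c \<in> phi P r Y t" using that by (simp add: phi_def)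
      then show ?thesis using assms by simp
    next
      case False then show ?thesis by auto
    qed
    then show ?thesis unfolding obs_at_def by (auto simp: fun_eq_iff)
  qed
  then show ?case using Suc.IH by (metis hist.simps(2))
qed

lemma phi_unobs: "c \<notin> phi P r Y t \<Longrightarrow> phi P r (Y((t,c):=x)) s = phi P r Y s"
proof -
  assume a: "c \<notin> phi P r Y t"
  show ?thesis unfolding phi_def using hist_unobs[OF a, of x "s-1"] by simp
qed

lemma phi_eq: "hist P r Y n = hist P r Y' n \<Longrightarrow> t \<le> n + 1 \<Longrightarrow> phi P r Y t = phi P r Y' t"
proof -
  assume a: "hist P r Y n = hist P r Y' n" "t \<le> n + 1"
  have "hist P r Y (t-1) = hist P r Y' (t-1)" using a by (intro hist_eq_le[OF a(1)]) simp
  then show ?thesis by (simp add: phi_def)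
qed

lemma obs_eq:
  assumes "hist P r Y n = hist P r Y' n" "t \<in> {1..n}" "k \<in> phi P r Y t"
  shows "Y (t, k) = Y' (t, k)"
proof -
  have "hist P r Y n ! (t - 1) = hist P r Y' n ! (t - 1)" using assms by simp
  moreover have "hist P r Y (t-1) = hist P r Y' (t-1)" using assms by (intro hist_eq_le[OF assms(1)]) auto
  moreover have tn: "t - 1 < n" using assms(2) by auto
  ultimately have "obs_at (phi P r Y t) Y t = obs_at (phi P r Y t) Y' t"
    using assms hist_nth[of "t-1" n P r Y] hist_nth[of "t-1" n P r Y'] by (simp add: phi_def)
  then have "obs_at (phi P r Y t) Y t k = obs_at (phi P r Y t) Y' t k" by simp
  then show ?thesis using assms(3) by (simp add: obs_at_def)
qed

lemma Ssum_eq: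
  assumes "hist P r Y n = hist P r Y' n"
  shows "Ssum f g P r Y k n = Ssum f g P r Y' k n"
  unfolding Ssum_def
proof (rule sum.cong[OF refl])
  fix t assume t: "t \<in> {1..n}"
  then have "phi P r Y t = phi P r Y' t" using phi_eq[OF assms] by auto
  then show "(if k \<in> phi P r Y t then llr f g (Y (t, k)) else 0) = (if k \<in> phi P r Y' t then llr f g (Y' (t, k)) else 0)"
    using obs_eq[OF assms t] by auto
qed




definition rj :: "('a \<Rightarrow> real) \<Rightarrow> ('a \<Rightarrow> real) \<Rightarrow> 'a \<Rightarrow> ennreal" where
  "rj f g y = ennreal (dens f g True y / dens f g False y)"
definition rm :: "('a \<Rightarrow> real) \<Rightarrow> ('a \<Rightarrow> real) \<Rightarrow> 'a \<Rightarrow> ennreal" where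
  "rm f g y = ennreal (dens f g False y / dens f g True y)"
definition sn :: "nat \<Rightarrow> nat \<Rightarrow> nat \<Rightarrow> nat \<times> nat \<Rightarrow> bool" where
  "sn m j n = (\<lambda>i. if fst i \<in> {1..n} then snd i = j else snd i = m)"
definition dd :: "('a \<Rightarrow> real) \<Rightarrow> ('a \<Rightarrow> real) \<Rightarrow> nat \<Rightarrow> nat \<Rightarrow> nat \<Rightarrow> 'r \<times> 'a obs \<Rightarrow> ennreal" where
  "dd f g m j t \<omega> = rj f g (snd \<omega> (t,j)) * rm f g (snd \<omega> (t,m))"
definition Dn :: "('a \<Rightarrow> real) \<Rightarrow> ('a \<Rightarrow> real) \<Rightarrow> nat \<Rightarrow> nat \<Rightarrow> nat \<Rightarrow> 'r \<times> 'a obs \<Rightarrow> ennreal" where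
  "Dn f g m j n \<omega> = (\<Prod>t\<in>{1..n}. dd f g m j t \<omega>)"

context FG begin

lemma coord_meas_gen: "(\<lambda>\<omega>. snd \<omega> i) \<in> measurable (Om R \<mu> f g \<sigma>) \<mu>"
proof -
  have "(\<lambda>\<omega>. snd \<omega> i) \<in> measurable (Om R \<mu> f g \<sigma>) (CL \<mu> f g \<sigma> i)"
    unfolding Om_def by measurable
  then show ?thesis by (subst (asm) measurable_cong_sets[OF refl sets_CL])
qed

lemma coord_meas: "h \<in> borel_measurable \<mu> \<Longrightarrow> (\<lambda>\<omega>. h (snd \<omega> i)) \<in> borel_measurable (Om R \<mu> f g \<sigma>)"
  using measurable_compose[OF coord_meas_gen] by blast

lemma rj_meas: "rj f g \<in> borel_measurable \<mu>" unfolding rj_def by measurable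
lemma rm_meas: "rm f g \<in> borel_measurable \<mu>" unfolding rm_def by measurable

lemma dd_meas: "dd f g m j t \<in> borel_measurable (Om R \<mu> f g \<sigma>)"
  unfolding dd_def by (intro borel_measurable_times_ennreal coord_meas rj_meas rm_meas)

lemma Dn_meas: "Dn f g m j n \<in> borel_measurable (Om R \<mu> f g \<sigma>)"
  unfolding Dn_def by (intro borel_measurable_prod_ennreal dd_meas)

lemma hybrid:
  assumes jm: "j \<noteq> m" and Psi: "Psi \<in> borel_measurable (Om R \<mu> f g \<sigma>)"
  shows "(\<integral>\<^sup>+\<omega>. Psi \<omega> \<partial>Om R \<mu> f g (sn m j n)) = (\<integral>\<^sup>+\<omega>. Psi \<omega> * Dn f g m j n \<omega> \<partial>Om R \<mu> f g (sn m j 0))"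
  using Psi
proof (induction n arbitrary: Psi)
  case 0
  then show ?case by (simp add: Dn_def)
next
  case (Suc n)
  let ?s1 = "(sn m j n)((Suc n, j) := True)"
  have seq: "sn m j (Suc n) = ?s1((Suc n, m) := False)"
    using jm by (auto simp: sn_def fun_eq_iff)
  have s1m: "?s1 (Suc n, m) = True" using jm by (simp add: sn_def)
  have snj: "sn m j n (Suc n, j) = False" using jm by (simp add: sn_def)
  have P1: "Psi \<in> borel_measurable (Om R \<mu> f g ?s1)" using meas_Om[OF Suc.prems] .
  have "(\<integral>\<^sup>+\<omega>. Psi \<omega> \<partial>Om R \<mu> f g (sn m j (Suc n))) =
        (\<integral>\<^sup>+\<omega>. Psi \<omega> * rm f g (snd \<omega> (Suc n, m)) \<partial>Om R \<mu> f g ?s1)"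
    unfolding seq using change_coord[OF P1, of "(Suc n, m)" False] s1m by (simp add: rm_def)
  also have "\<dots> = (\<integral>\<^sup>+\<omega>. (Psi \<omega> * rm f g (snd \<omega> (Suc n, m))) * rj f g (snd \<omega> (Suc n, j)) \<partial>Om R \<mu> f g (sn m j n))"
  proof -
    have m2: "(\<lambda>\<omega>. Psi \<omega> * rm f g (snd \<omega> (Suc n, m))) \<in> borel_measurable (Om R \<mu> f g (sn m j n))"
      by (intro borel_measurable_times_ennreal meas_Om[OF Suc.prems] coord_meas rm_meas)
    show ?thesis using change_coord[OF m2, of "(Suc n, j)" True] snj by (simp add: rj_def)
  qed
  also have "\<dots> = (\<integral>\<^sup>+\<omega>. ((Psi \<omega> * rm f g (snd \<omega> (Suc n, m))) * rj f g (snd \<omega> (Suc n, j))) * Dn f g m j n \<omega> \<partial>Om R \<mu> f g (sn m j 0))"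
    by (rule Suc.IH) (intro borel_measurable_times_ennreal Suc.prems coord_meas rm_meas rj_meas)
  also have "\<dots> = (\<integral>\<^sup>+\<omega>. Psi \<omega> * Dn f g m j (Suc n) \<omega> \<partial>Om R \<mu> f g (sn m j 0))"
    by (simp add: Dn_def dd_def ac_simps)
  finally show ?case .
qed

lemma restrict_eq:
  assumes Psi: "Psi \<in> borel_measurable (Om R \<mu> f g \<sigma>)"
    and dep: "\<And>r Y Y'. (\<And>i. i \<in> J \<Longrightarrow> Y i = Y' i) \<Longrightarrow> Psi (r, Y) = Psi (r, Y')"
    and agree: "\<And>i. i \<in> J \<Longrightarrow> \<sigma> i = \<sigma>' i"
  shows "(\<integral>\<^sup>+\<omega>. Psi \<omega> \<partial>Om R \<mu> f g \<sigma>) = (\<integral>\<^sup>+\<omega>. Psi \<omega> \<partial>Om R \<mu> f g \<sigma>')"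
proof -
  interpret fp: prob_space "density \<mu> (\<lambda>x. ennreal (f x))" by (rule fp)
  obtain y0 where y0: "y0 \<in> space \<mu>" using fp.not_empty by auto
  define ext where "ext = (\<lambda>Z :: 'a obs. \<lambda>i. if i \<in> J then Z i else y0)"
  have key: "(\<integral>\<^sup>+\<omega>. Psi \<omega> \<partial>Om R \<mu> f g s) = (\<integral>\<^sup>+r. \<integral>\<^sup>+Z. Psi (r, ext Z) \<partial>(\<Pi>\<^sub>M i\<in>J. CL \<mu> f g s i) \<partial>R)"
    if Ps: "Psi \<in> borel_measurable (Om R \<mu> f g s)" for s
  proof -
    let ?P = "\<Pi>\<^sub>M i\<in>UNIV. CL \<mu> f g s i"
    let ?PJ = "\<Pi>\<^sub>M i\<in>J. CL \<mu> f g s i"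
    interpret P: prob_space ?P by (rule PiM_prob)
    have Pm: "Psi \<in> borel_measurable (R \<Otimes>\<^sub>M ?P)" using Ps unfolding Om_def .
    have D: "distr ?P ?PJ (\<lambda>Y. restrict Y J) = ?PJ"
      using distr_PiM_reindex[of UNIV "CL \<mu> f g s" id J] CL_prob by (simp add: restrict_def)
    have mr: "(\<lambda>Y. restrict Y J) \<in> measurable ?P ?PJ" by (rule measurable_restrict_subset) simp
    have me: "ext \<in> measurable ?PJ ?P"
      unfolding ext_def
    proof (rule measurable_PiM_single')
      fix i :: "nat \<times> nat"
      show "(\<lambda>Z. if i \<in> J then Z i else y0) \<in> measurable ?PJ (CL \<mu> f g s i)"
        by (cases "i \<in> J") (auto simp: y0)
    next
      show "(\<lambda>Z i. if i \<in> J then Z i else y0) \<in> space ?PJ \<rightarrow> (\<Pi>\<^sub>E i\<in>UNIV. space (CL \<mu> f g s i))"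
        using y0 by (auto simp: space_PiM)
    qed
    have "(\<integral>\<^sup>+\<omega>. Psi \<omega> \<partial>Om R \<mu> f g s) = (\<integral>\<^sup>+r. \<integral>\<^sup>+Y. Psi (r, Y) \<partial>?P \<partial>R)"
      unfolding Om_def using P.nn_integral_fst[OF Pm] by simp
    also have "\<dots> = (\<integral>\<^sup>+r. \<integral>\<^sup>+Y. Psi (r, ext (restrict Y J)) \<partial>?P \<partial>R)"
    proof (intro nn_integral_cong)
      fix r Y show "Psi (r, Y) = Psi (r, ext (restrict Y J))" by (rule dep) (simp add: ext_def)
    qed
    also have "\<dots> = (\<integral>\<^sup>+r. \<integral>\<^sup>+Z. Psi (r, ext Z) \<partial>?PJ \<partial>R)"
    proof (intro nn_integral_cong)
      fix r assume r: "r \<in> space R"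
      have m1: "(\<lambda>Z. Psi (r, ext Z)) \<in> borel_measurable ?PJ"
      proof -
        have "(\<lambda>Z. (r, ext Z)) \<in> measurable ?PJ (R \<Otimes>\<^sub>M ?P)"
          by (rule measurable_Pair[OF measurable_const[OF r] me])
        then show ?thesis using Pm by (rule measurable_compose)
      qed
      show "(\<integral>\<^sup>+Y. Psi (r, ext (restrict Y J)) \<partial>?P) = (\<integral>\<^sup>+Z. Psi (r, ext Z) \<partial>?PJ)"
        using nn_integral_distr[OF mr, of "\<lambda>Z. Psi (r, ext Z)"] m1 D by simp
    qed
    finally show ?thesis .
  qed
  have PJ: "(\<Pi>\<^sub>M i\<in>J. CL \<mu> f g \<sigma> i) = (\<Pi>\<^sub>M i\<in>J. CL \<mu> f g \<sigma>' i)"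
    by (intro PiM_cong) (auto simp: CL_def agree)
  show ?thesis using key[OF Psi] key[OF meas_Om[OF Psi]] PJ by simp
qed

lemma integrate_out_cond:
  assumes F: "F \<in> borel_measurable (Om R \<mu> f g \<sigma>)"
    and C: "Measurable.pred (Om R \<mu> f g \<sigma>) C"
    and Cinv: "\<And>r Y x. C (r, Y(i0:=x)) = C (r, Y)"
    and Finv: "\<And>r Y x. \<not> C (r, Y) \<Longrightarrow> F (r, Y(i0:=x)) = F (r, Y)"
    and q: "q \<in> borel_measurable \<mu>"
    and q1: "(\<integral>\<^sup>+x. q x \<partial>CL \<mu> f g \<sigma> i0) = 1"
  shows "(\<integral>\<^sup>+\<omega>. F \<omega> * q (snd \<omega> i0) \<partial>Om R \<mu> f g \<sigma>) =
         (\<integral>\<^sup>+\<omega>. F \<omega> * (if C \<omega> then q (snd \<omega> i0) else 1) \<partial>Om R \<mu> f g \<sigma>)"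
proof -
  define Phi where "Phi = (\<lambda>\<omega>. if C \<omega> then 0 else F \<omega>)"
  have Phim: "Phi \<in> borel_measurable (Om R \<mu> f g \<sigma>)"
    unfolding Phi_def using C F by measurable
  have qm: "(\<lambda>\<omega>. q (snd \<omega> i0)) \<in> borel_measurable (Om R \<mu> f g \<sigma>)" by (rule coord_meas[OF q])
  have Phiinv: "Phi (r, Y(i0:=x)) = Phi (r, Y)" for r Y x
    unfolding Phi_def using Cinv[of r Y x] Finv[of r Y x] by auto
  have A: "(\<lambda>\<omega>. if C \<omega> then F \<omega> * q (snd \<omega> i0) else 0) \<in> borel_measurable (Om R \<mu> f g \<sigma>)"
    using C F qm by measurable
  have "(\<integral>\<^sup>+\<omega>. F \<omega> * q (snd \<omega> i0) \<partial>Om R \<mu> f g \<sigma>) =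
        (\<integral>\<^sup>+\<omega>. (if C \<omega> then F \<omega> * q (snd \<omega> i0) else 0) + Phi \<omega> * q (snd \<omega> i0) \<partial>Om R \<mu> f g \<sigma>)"
    by (intro nn_integral_cong) (simp add: Phi_def)
  also have "\<dots> = (\<integral>\<^sup>+\<omega>. (if C \<omega> then F \<omega> * q (snd \<omega> i0) else 0) \<partial>Om R \<mu> f g \<sigma>) +
                  (\<integral>\<^sup>+\<omega>. Phi \<omega> * q (snd \<omega> i0) \<partial>Om R \<mu> f g \<sigma>)"
    by (rule nn_integral_add[OF A]) (intro borel_measurable_times_ennreal Phim qm)
  also have "(\<integral>\<^sup>+\<omega>. Phi \<omega> * q (snd \<omega> i0) \<partial>Om R \<mu> f g \<sigma>) = (\<integral>\<^sup>+\<omega>. Phi \<omega> \<partial>Om R \<mu> f g \<sigma>)"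
    by (rule integrate_out[OF Phim Phiinv q q1])
  also have "(\<integral>\<^sup>+\<omega>. (if C \<omega> then F \<omega> * q (snd \<omega> i0) else 0) \<partial>Om R \<mu> f g \<sigma>) + (\<integral>\<^sup>+\<omega>. Phi \<omega> \<partial>Om R \<mu> f g \<sigma>) =
       (\<integral>\<^sup>+\<omega>. (if C \<omega> then F \<omega> * q (snd \<omega> i0) else 0) + Phi \<omega> \<partial>Om R \<mu> f g \<sigma>)"
    by (rule nn_integral_add[OF A Phim, symmetric])
  also have "\<dots> = (\<integral>\<^sup>+\<omega>. F \<omega> * (if C \<omega> then q (snd \<omega> i0) else 1) \<partial>Om R \<mu> f g \<sigma>)"
    by (intro nn_integral_cong) (simp add: Phi_def)
  finally show ?thesis .
qed

end



definition lam :: "('a \<Rightarrow> real) \<Rightarrow> ('a \<Rightarrow> real) \<Rightarrow> ('r, 'a) policy \<Rightarrow> nat \<Rightarrow> nat \<Rightarrow> nat \<Rightarrow> 'r \<times> 'a obs \<Rightarrow> ennreal" where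
  "lam f g P m j t \<omega> = (if j \<in> phi P (fst \<omega>) (snd \<omega>) t then rj f g (snd \<omega> (t,j)) else 1) *
                        (if m \<in> phi P (fst \<omega>) (snd \<omega>) t then rm f g (snd \<omega> (t,m)) else 1)"
definition Xk :: "('a \<Rightarrow> real) \<Rightarrow> ('a \<Rightarrow> real) \<Rightarrow> ('r, 'a) policy \<Rightarrow> nat \<Rightarrow> nat \<Rightarrow> nat \<Rightarrow> nat \<Rightarrow> 'r \<times> 'a obs \<Rightarrow> ennreal" where
  "Xk f g P m j n k \<omega> = (\<Prod>t\<in>{1..n}. if t \<le> k then lam f g P m j t \<omega> else dd f g m j t \<omega>)"
definition hdet :: "('r, 'a) policy \<Rightarrow> nat \<Rightarrow> ('r \<times> 'a obs \<Rightarrow> 'b) \<Rightarrow> bool" where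
  "hdet P n Psi \<longleftrightarrow> (\<forall>r Y Y'. hist P r Y n = hist P r Y' n \<longrightarrow> Psi (r, Y) = Psi (r, Y'))"

lemma lam_inv: "t' \<noteq> t \<Longrightarrow> c \<notin> phi P r Y t \<Longrightarrow> lam f g P m j t' (r, Y((t,c):=x)) = lam f g P m j t' (r, Y)"
  unfolding lam_def using phi_unobs[of c P r Y t x t'] by simp

lemma dd_inv: "t' \<noteq> t \<Longrightarrow> dd f g m j t' (r, Y((t,c):=x)) = dd f g m j t' (r, Y)"
  unfolding dd_def by simp

lemma hdet_inv: "hdet P n Psi \<Longrightarrow> c \<notin> phi P r Y t \<Longrightarrow> Psi (r, Y((t,c):=x)) = Psi (r, Y)"
  unfolding hdet_def using hist_unobs[of c P r Y t x n] by blast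

lemma phi_next_inv: "phi P r (Y((Suc k, c):=x)) (Suc k) = phi P r Y (Suc k)"
proof -
  have "hist P r (Y((Suc k, c):=x)) k = hist P r Y k" by (rule hist_local) auto
  then show ?thesis by (simp add: phi_def)
qed

context FG begin

lemma rm1: "\<sigma> i \<Longrightarrow> (\<integral>\<^sup>+y. rm f g y \<partial>CL \<mu> f g \<sigma> i) = 1"
proof -
  assume s: "\<sigma> i"
  interpret fp: prob_space "density \<mu> (\<lambda>x. ennreal (f x))" by (rule fp)
  have "(\<integral>\<^sup>+y. 1 \<partial>density \<mu> (\<lambda>x. ennreal (dens f g False x))) =
        (\<integral>\<^sup>+y. ennreal (dens f g False y / dens f g True y) * 1 \<partial>density \<mu> (\<lambda>x. ennreal (dens f g True x)))"
    by (rule dens_change) simp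
  moreover have "(\<integral>\<^sup>+y. 1 \<partial>density \<mu> (\<lambda>x. ennreal (dens f g False x))) = 1"
    using fp.emeasure_space_1 by (simp add: dens_def)
  ultimately show ?thesis using s by (simp add: CL_def rm_def)
qed

lemma rj1: "\<not> \<sigma> i \<Longrightarrow> (\<integral>\<^sup>+y. rj f g y \<partial>CL \<mu> f g \<sigma> i) = 1"
proof -
  assume s: "\<not> \<sigma> i"
  interpret gp: prob_space "density \<mu> (\<lambda>x. ennreal (g x))" by (rule gp)
  have "(\<integral>\<^sup>+y. 1 \<partial>density \<mu> (\<lambda>x. ennreal (dens f g True x))) =
        (\<integral>\<^sup>+y. ennreal (dens f g True y / dens f g False y) * 1 \<partial>density \<mu> (\<lambda>x. ennreal (dens f g False x)))"
    by (rule dens_change) simp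
  moreover have "(\<integral>\<^sup>+y. 1 \<partial>density \<mu> (\<lambda>x. ennreal (dens f g True x))) = 1"
    using gp.emeasure_space_1 by (simp add: dens_def)
  ultimately show ?thesis using s by (simp add: CL_def rj_def)
qed

lemma phi_pred:
  assumes selm: "\<And>k. (\<lambda>\<omega>. sel P (fst \<omega>) (hist P (fst \<omega>) (snd \<omega>) k)) \<in> Om R \<mu> f g \<sigma> \<rightarrow>\<^sub>M count_space UNIV"
  shows "Measurable.pred (Om R \<mu> f g \<sigma>) (\<lambda>\<omega>. c \<in> phi P (fst \<omega>) (snd \<omega>) t)"
proof -
  have "(\<lambda>\<omega>. phi P (fst \<omega>) (snd \<omega>) t) \<in> Om R \<mu> f g \<sigma> \<rightarrow>\<^sub>M count_space UNIV"
    unfolding phi_def by (rule selm)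
  then show ?thesis
    by (rule measurable_compose[where g="\<lambda>A. c \<in> A"]) simp
qed

lemma lam_meas:
  assumes selm: "\<And>k. (\<lambda>\<omega>. sel P (fst \<omega>) (hist P (fst \<omega>) (snd \<omega>) k)) \<in> Om R \<mu> f g \<sigma> \<rightarrow>\<^sub>M count_space UNIV"
  shows "lam f g P m j t \<in> borel_measurable (Om R \<mu> f g \<sigma>)"
proof -
  note [measurable] = phi_pred[OF selm] coord_meas[OF rj_meas] coord_meas[OF rm_meas]
  show ?thesis unfolding lam_def by measurable
qed

lemma Xk_meas:
  assumes selm: "\<And>k. (\<lambda>\<omega>. sel P (fst \<omega>) (hist P (fst \<omega>) (snd \<omega>) k)) \<in> Om R \<mu> f g \<sigma> \<rightarrow>\<^sub>M count_space UNIV"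
  shows "Xk f g P m j n k \<in> borel_measurable (Om R \<mu> f g \<sigma>)"
proof -
  note [measurable] = lam_meas[OF selm] dd_meas
  show ?thesis unfolding Xk_def by measurable
qed

lemma Xk_step:
  assumes jm: "j \<noteq> m" and Psi: "Psi \<in> borel_measurable (Om R \<mu> f g (sn m j 0))"
    and hd: "hdet P n Psi" and k: "Suc k \<le> n"
    and selm: "\<And>k. (\<lambda>\<omega>. sel P (fst \<omega>) (hist P (fst \<omega>) (snd \<omega>) k)) \<in> Om R \<mu> f g (sn m j 0) \<rightarrow>\<^sub>M count_space UNIV"
  shows "(\<integral>\<^sup>+\<omega>. Psi \<omega> * Xk f g P m j n k \<omega> \<partial>Om R \<mu> f g (sn m j 0)) =
         (\<integral>\<^sup>+\<omega>. Psi \<omega> * Xk f g P m j n (Suc k) \<omega> \<partial>Om R \<mu> f g (sn m j 0))"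
proof -
  let ?M = "Om R \<mu> f g (sn m j 0)"
  let ?t = "Suc k"
  define Rest where "Rest = (\<lambda>\<omega>. \<Prod>t\<in>{1..n}-{?t}. if t \<le> k then lam f g P m j t \<omega> else dd f g m j t \<omega>)"
  define G where "G = (\<lambda>\<omega>. Psi \<omega> * Rest \<omega>)"
  have tin: "?t \<in> {1..n}" using k by simp
  have X1: "Xk f g P m j n k \<omega> = dd f g m j ?t \<omega> * Rest \<omega>" for \<omega>
    unfolding Xk_def Rest_def by (subst prod.remove[OF _ tin]) auto
  have X2: "Xk f g P m j n (Suc k) \<omega> = lam f g P m j ?t \<omega> * Rest \<omega>" for \<omega>
  proof -
    have "Xk f g P m j n (Suc k) \<omega> = lam f g P m j ?t \<omega> *
       (\<Prod>t\<in>{1..n}-{?t}. if t \<le> Suc k then lam f g P m j t \<omega> else dd f g m j t \<omega>)"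
      unfolding Xk_def by (subst prod.remove[OF _ tin]) auto
    also have "(\<Prod>t\<in>{1..n}-{?t}. if t \<le> Suc k then lam f g P m j t \<omega> else dd f g m j t \<omega>) = Rest \<omega>"
      unfolding Rest_def by (intro prod.cong) auto
    finally show ?thesis .
  qed
  note [measurable] = lam_meas[OF selm] dd_meas phi_pred[OF selm] coord_meas[OF rj_meas] coord_meas[OF rm_meas] Psi
  have Gm[measurable]: "G \<in> borel_measurable ?M" unfolding G_def Rest_def by measurable
  have Rinv: "Rest (r, Y((?t,c):=x)) = Rest (r, Y)" if "c \<notin> phi P r Y ?t" for r Y c x
    unfolding Rest_def using lam_inv[OF _ that] dd_inv by (intro prod.cong) auto
  have Ginv: "G (r, Y((?t,c):=x)) = G (r, Y)" if "c \<notin> phi P r Y ?t" for r Y c x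
    unfolding G_def using Rinv[OF that] hdet_inv[OF hd that] by simp
  have "(\<integral>\<^sup>+\<omega>. Psi \<omega> * Xk f g P m j n k \<omega> \<partial>?M) =
        (\<integral>\<^sup>+\<omega>. (G \<omega> * rj f g (snd \<omega> (?t, j))) * rm f g (snd \<omega> (?t, m)) \<partial>?M)"
    by (intro nn_integral_cong) (simp add: X1 G_def dd_def ac_simps)
  also have "\<dots> = (\<integral>\<^sup>+\<omega>. (G \<omega> * rj f g (snd \<omega> (?t, j))) *
       (if m \<in> phi P (fst \<omega>) (snd \<omega>) ?t then rm f g (snd \<omega> (?t, m)) else 1) \<partial>?M)"
  proof (rule integrate_out_cond[where C="\<lambda>\<omega>. m \<in> phi P (fst \<omega>) (snd \<omega>) ?t"])
    show "(\<lambda>\<omega>. G \<omega> * rj f g (snd \<omega> (?t, j))) \<in> borel_measurable ?M" by measurable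
    show "Measurable.pred ?M (\<lambda>\<omega>. m \<in> phi P (fst \<omega>) (snd \<omega>) ?t)" by measurable
    show "(m \<in> phi P (fst (r, Y((?t, m) := x))) (snd (r, Y((?t, m) := x))) ?t) = (m \<in> phi P (fst (r, Y)) (snd (r, Y)) ?t)" for r Y x
      using phi_next_inv[of P r Y k m x] by simp
    show "G (r, Y((?t, m) := x)) * rj f g (snd (r, Y((?t, m) := x)) (?t, j)) = G (r, Y) * rj f g (snd (r, Y) (?t, j))"
      if "\<not> m \<in> phi P (fst (r, Y)) (snd (r, Y)) ?t" for r Y x
      using Ginv[of m r Y x] that jm by simp
    show "rm f g \<in> borel_measurable \<mu>" by (rule rm_meas)
    show "(\<integral>\<^sup>+y. rm f g y \<partial>CL \<mu> f g (sn m j 0) (?t, m)) = 1" by (rule rm1) (simp add: sn_def)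
  qed
  also have "\<dots> = (\<integral>\<^sup>+\<omega>. (G \<omega> * (if m \<in> phi P (fst \<omega>) (snd \<omega>) ?t then rm f g (snd \<omega> (?t, m)) else 1)) *
       rj f g (snd \<omega> (?t, j)) \<partial>?M)"
    by (intro nn_integral_cong) (simp add: ac_simps)
  also have "\<dots> = (\<integral>\<^sup>+\<omega>. (G \<omega> * (if m \<in> phi P (fst \<omega>) (snd \<omega>) ?t then rm f g (snd \<omega> (?t, m)) else 1)) *
       (if j \<in> phi P (fst \<omega>) (snd \<omega>) ?t then rj f g (snd \<omega> (?t, j)) else 1) \<partial>?M)"
  proof (rule integrate_out_cond[where C="\<lambda>\<omega>. j \<in> phi P (fst \<omega>) (snd \<omega>) ?t"])
    show "(\<lambda>\<omega>. G \<omega> * (if m \<in> phi P (fst \<omega>) (snd \<omega>) ?t then rm f g (snd \<omega> (?t, m)) else 1)) \<in> borel_measurable ?M"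
      by measurable
    show "Measurable.pred ?M (\<lambda>\<omega>. j \<in> phi P (fst \<omega>) (snd \<omega>) ?t)" by measurable
    show "(j \<in> phi P (fst (r, Y((?t, j) := x))) (snd (r, Y((?t, j) := x))) ?t) = (j \<in> phi P (fst (r, Y)) (snd (r, Y)) ?t)" for r Y x
      using phi_next_inv[of P r Y k j x] by simp
    show "G (r, Y((?t, j) := x)) * (if m \<in> phi P (fst (r, Y((?t, j) := x))) (snd (r, Y((?t, j) := x))) ?t then rm f g (snd (r, Y((?t, j) := x)) (?t, m)) else 1) =
          G (r, Y) * (if m \<in> phi P (fst (r, Y)) (snd (r, Y)) ?t then rm f g (snd (r, Y) (?t, m)) else 1)"
      if "\<not> j \<in> phi P (fst (r, Y)) (snd (r, Y)) ?t" for r Y x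
      using Ginv[of j r Y x] that jm phi_next_inv[of P r Y k j x] by simp
    show "rj f g \<in> borel_measurable \<mu>" by (rule rj_meas)
    show "(\<integral>\<^sup>+y. rj f g y \<partial>CL \<mu> f g (sn m j 0) (?t, j)) = 1" by (rule rj1) (simp add: sn_def jm)
  qed
  also have "\<dots> = (\<integral>\<^sup>+\<omega>. Psi \<omega> * Xk f g P m j n (Suc k) \<omega> \<partial>?M)"
    by (intro nn_integral_cong) (simp add: X2 G_def lam_def ac_simps)
  finally show ?thesis .
qed

end



lemma sn0: "sn m j 0 = (\<lambda>i. snd i = m)" by (simp add: sn_def fun_eq_iff)

context FG begin

lemma Xk_all:
  assumes jm: "j \<noteq> m" and Psi: "Psi \<in> borel_measurable (Om R \<mu> f g (sn m j 0))"
    and hd: "hdet P n Psi"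
    and selm: "\<And>k. (\<lambda>\<omega>. sel P (fst \<omega>) (hist P (fst \<omega>) (snd \<omega>) k)) \<in> Om R \<mu> f g (sn m j 0) \<rightarrow>\<^sub>M count_space UNIV"
  shows "k \<le> n \<Longrightarrow> (\<integral>\<^sup>+\<omega>. Psi \<omega> * Dn f g m j n \<omega> \<partial>Om R \<mu> f g (sn m j 0)) =
         (\<integral>\<^sup>+\<omega>. Psi \<omega> * Xk f g P m j n k \<omega> \<partial>Om R \<mu> f g (sn m j 0))"
proof (induction k)
  case 0
  have "Dn f g m j n \<omega> = Xk f g P m j n 0 \<omega>" for \<omega>
    unfolding Dn_def Xk_def by (intro prod.cong) auto
  then show ?case by simp
next
  case (Suc k)
  then show ?case using Xk_step[OF jm Psi hd Suc.prems selm] by simp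
qed

lemma change_measure:
  assumes jm: "j \<noteq> m" and Psi: "Psi \<in> borel_measurable (Om R \<mu> f g \<sigma>)"
    and hd: "hdet P n Psi"
    and selm: "\<And>k \<sigma>. (\<lambda>\<omega>. sel P (fst \<omega>) (hist P (fst \<omega>) (snd \<omega>) k)) \<in> Om R \<mu> f g \<sigma> \<rightarrow>\<^sub>M count_space UNIV"
  shows "(\<integral>\<^sup>+\<omega>. Psi \<omega> \<partial>Om R \<mu> f g (\<lambda>i. snd i = j)) =
         (\<integral>\<^sup>+\<omega>. Psi \<omega> * Xk f g P m j n n \<omega> \<partial>Om R \<mu> f g (\<lambda>i. snd i = m))"
proof -
  have "(\<integral>\<^sup>+\<omega>. Psi \<omega> \<partial>Om R \<mu> f g (\<lambda>i. snd i = j)) = (\<integral>\<^sup>+\<omega>. Psi \<omega> \<partial>Om R \<mu> f g (sn m j n))"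
  proof (rule restrict_eq[where J="{i. fst i \<in> {1..n}}"])
    show "Psi \<in> borel_measurable (Om R \<mu> f g (\<lambda>i. snd i = j))" by (rule meas_Om[OF Psi])
    show "Psi (r, Y) = Psi (r, Y')" if "\<And>i. i \<in> {i. fst i \<in> {1..n}} \<Longrightarrow> Y i = Y' i" for r Y Y'
    proof -
      have "hist P r Y n = hist P r Y' n" by (rule hist_local) (use that in auto)
      then show ?thesis using hd unfolding hdet_def by blast
    qed
    show "(snd i = j) = sn m j n i" if "i \<in> {i. fst i \<in> {1..n}}" for i
      using that by (simp add: sn_def)
  qed
  also have "\<dots> = (\<integral>\<^sup>+\<omega>. Psi \<omega> * Dn f g m j n \<omega> \<partial>Om R \<mu> f g (sn m j 0))"
    by (rule hybrid[OF jm Psi])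
  also have "\<dots> = (\<integral>\<^sup>+\<omega>. Psi \<omega> * Xk f g P m j n n \<omega> \<partial>Om R \<mu> f g (sn m j 0))"
    by (rule Xk_all[OF jm meas_Om[OF Psi] hd selm]) simp
  finally show ?thesis unfolding sn0 .
qed

lemma good_AE: "AE \<omega> in Om R \<mu> f g \<sigma>. \<forall>i. 0 < f (snd \<omega> i) \<and> 0 < g (snd \<omega> i)"
proof -
  let ?P = "\<Pi>\<^sub>M i\<in>UNIV. CL \<mu> f g \<sigma> i"
  interpret P: prob_space ?P by (rule PiM_prob)
  interpret Rp: prob_space R by (rule Rp)
  interpret PS: pair_sigma_finite R ?P ..
  have c: "AE x in CL \<mu> f g \<sigma> i. 0 < f x \<and> 0 < g x" for i
  proof -
    have "AE x in \<mu>. 0 < ennreal (dens f g (\<sigma> i) x) \<longrightarrow> 0 < f x \<and> 0 < g x"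
      using fg0 AE_space
    proof eventually_elim
      case (elim x)
      then show ?case using fnn gnn unfolding dens_def
        by (cases "\<sigma> i") (auto simp: less_le)
    qed
    then show ?thesis unfolding CL_def by (subst AE_density) auto
  qed
  have "AE Y in ?P. \<forall>i. 0 < f (Y i) \<and> 0 < g (Y i)"
    unfolding AE_all_countable
  proof
    fix i :: "nat \<times> nat"
    show "AE Y in ?P. 0 < f (Y i) \<and> 0 < g (Y i)"
      by (rule AE_PiM_component[OF CL_prob _ c]) simp
  qed
  then have "AE \<omega> in R \<Otimes>\<^sub>M ?P. \<forall>i. 0 < f (snd \<omega> i) \<and> 0 < g (snd \<omega> i)"
  proof (intro PS.AE_pair_measure)
    have [measurable]: "(\<lambda>\<omega>. f (snd \<omega> i)) \<in> borel_measurable (R \<Otimes>\<^sub>M ?P)" for i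
      using coord_meas[OF fm, of i \<sigma>] unfolding Om_def .
    have [measurable]: "(\<lambda>\<omega>. g (snd \<omega> i)) \<in> borel_measurable (R \<Otimes>\<^sub>M ?P)" for i
      using coord_meas[OF gm, of i \<sigma>] unfolding Om_def .
    show "{x \<in> space (R \<Otimes>\<^sub>M ?P). \<forall>i. 0 < f (snd x i) \<and> 0 < g (snd x i)} \<in> sets (R \<Otimes>\<^sub>M ?P)"
      by measurable
  qed auto
  then show ?thesis unfolding Om_def .
qed

lemma Xk_exp:
  assumes good: "\<forall>i. 0 < f (snd \<omega> i) \<and> 0 < g (snd \<omega> i)"
  shows "Xk f g P m j n n \<omega> = ennreal (exp (Ssum f g P (fst \<omega>) (snd \<omega>) j n - Ssum f g P (fst \<omega>) (snd \<omega>) m n))"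
proof -
  let ?a = "\<lambda>t. (if j \<in> phi P (fst \<omega>) (snd \<omega>) t then llr f g (snd \<omega> (t, j)) else 0)"
  let ?b = "\<lambda>t. (if m \<in> phi P (fst \<omega>) (snd \<omega>) t then llr f g (snd \<omega> (t, m)) else 0)"
  have rje: "rj f g (snd \<omega> i) = ennreal (exp (llr f g (snd \<omega> i)))" for i
    using good[rule_format, of i] by (simp add: rj_def dens_def llr_def)
  have rme: "rm f g (snd \<omega> i) = ennreal (exp (- llr f g (snd \<omega> i)))" for i
    using good[rule_format, of i] by (simp add: rm_def dens_def llr_def exp_minus)
  have lame: "lam f g P m j t \<omega> = ennreal (exp (?a t - ?b t))" for t
    unfolding lam_def rje rme by (simp add: exp_diff ennreal_mult[symmetric] divide_inverse exp_minus)
  have "Xk f g P m j n n \<omega> = (\<Prod>t\<in>{1..n}. ennreal (exp (?a t - ?b t)))"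
    unfolding Xk_def lame by (intro prod.cong) auto
  also have "\<dots> = ennreal (\<Prod>t\<in>{1..n}. exp (?a t - ?b t))"
    by (rule prod_ennreal) simp
  also have "\<dots> = ennreal (exp (\<Sum>t\<in>{1..n}. ?a t - ?b t))"
    by (simp add: exp_sum)
  also have "(\<Sum>t\<in>{1..n}. ?a t - ?b t) = Ssum f g P (fst \<omega>) (snd \<omega>) j n - Ssum f g P (fst \<omega>) (snd \<omega>) m n"
    unfolding Ssum_def by (simp add: sum_subtractf)
  finally show ?thesis .
qed

end



context FG begin

lemma llr_meas: "llr f g \<in> borel_measurable \<mu>" unfolding llr_def by measurable

lemma Ssum_meas:
  assumes selm: "\<And>k. (\<lambda>\<omega>. sel P (fst \<omega>) (hist P (fst \<omega>) (snd \<omega>) k)) \<in> Om R \<mu> f g \<sigma> \<rightarrow>\<^sub>M count_space UNIV"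
  shows "(\<lambda>\<omega>. Ssum f g P (fst \<omega>) (snd \<omega>) c n) \<in> borel_measurable (Om R \<mu> f g \<sigma>)"
proof -
  note [measurable] = phi_pred[OF selm] coord_meas[OF llr_meas]
  show ?thesis unfolding Ssum_def by measurable
qed

lemma indicator_integral:
  assumes "{\<omega> \<in> space M. Q \<omega>} \<in> sets M"
  shows "(\<integral>\<^sup>+\<omega>. indicator {\<omega>. Q \<omega>} \<omega> \<partial>M) = emeasure M {\<omega> \<in> space M. Q \<omega>}"
proof -
  have "(\<integral>\<^sup>+\<omega>. indicator {\<omega>. Q \<omega>} \<omega> \<partial>M) = (\<integral>\<^sup>+\<omega>. indicator {\<omega> \<in> space M. Q \<omega>} \<omega> \<partial>M)"
    by (intro nn_integral_cong) (simp add: indicator_def)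
  also have "\<dots> = emeasure M {\<omega> \<in> space M. Q \<omega>}"
    by (rule nn_integral_indicator[OF assms])
  finally show ?thesis .
qed

lemma event_bound:
  assumes jm: "j \<noteq> m"
    and selm: "\<And>k \<sigma>. (\<lambda>\<omega>. sel P (fst \<omega>) (hist P (fst \<omega>) (snd \<omega>) k)) \<in> Om R \<mu> f g \<sigma> \<rightarrow>\<^sub>M count_space UNIV"
    and Qm: "\<And>\<sigma>. Measurable.pred (Om R \<mu> f g \<sigma>) Q"
    and hd: "hdet P n Q"
  shows "emeasure (Om R \<mu> f g (\<lambda>i. snd i = m))
           {\<omega> \<in> space (Om R \<mu> f g (\<lambda>i. snd i = m)). Q \<omega> \<and>
               Ssum f g P (fst \<omega>) (snd \<omega>) m n - Ssum f g P (fst \<omega>) (snd \<omega>) j n < L}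
         \<le> ennreal (exp L) * emeasure (Om R \<mu> f g (\<lambda>i. snd i = j)) {\<omega> \<in> space (Om R \<mu> f g (\<lambda>i. snd i = j)). Q \<omega>}"
proof -
  let ?Pm = "Om R \<mu> f g (\<lambda>i. snd i = m)"
  let ?Pj = "Om R \<mu> f g (\<lambda>i. snd i = j)"
  let ?Sm = "\<lambda>\<omega>. Ssum f g P (fst \<omega>) (snd \<omega>) m n"
  let ?Sj = "\<lambda>\<omega>. Ssum f g P (fst \<omega>) (snd \<omega>) j n"
  define A where "A = {\<omega>. Q \<omega> \<and> ?Sm \<omega> - ?Sj \<omega> < L}"
  have sm: "?Sm \<in> borel_measurable (Om R \<mu> f g \<sigma>)" "?Sj \<in> borel_measurable (Om R \<mu> f g \<sigma>)" for \<sigma>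
    by (rule Ssum_meas[OF selm])+
  have Am: "{\<omega> \<in> space (Om R \<mu> f g \<sigma>). Q \<omega> \<and> ?Sm \<omega> - ?Sj \<omega> < L} \<in> sets (Om R \<mu> f g \<sigma>)" for \<sigma>
    using Qm[of \<sigma>] sm[of \<sigma>] by measurable
  have Qs: "{\<omega> \<in> space (Om R \<mu> f g \<sigma>). Q \<omega>} \<in> sets (Om R \<mu> f g \<sigma>)" for \<sigma>
    using Qm[of \<sigma>] by measurable
  have Psim: "(indicator A :: _ \<Rightarrow> ennreal) \<in> borel_measurable ?Pm"
  proof -
    have "(\<lambda>\<omega>. indicator A \<omega> :: ennreal) = (\<lambda>\<omega>. if Q \<omega> \<and> ?Sm \<omega> - ?Sj \<omega> < L then 1 else 0)"
      by (auto simp: A_def indicator_def fun_eq_iff)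
    moreover have "(\<lambda>\<omega>. if Q \<omega> \<and> ?Sm \<omega> - ?Sj \<omega> < L then 1 else 0 :: ennreal) \<in> borel_measurable ?Pm"
      using Qm[of "\<lambda>i. snd i = m"] sm[of "\<lambda>i. snd i = m"] by measurable
    ultimately show ?thesis by simp
  qed
  have hdA: "hdet P n (indicator A :: _ \<Rightarrow> ennreal)"
    unfolding hdet_def
  proof (intro allI impI)
    fix r Y Y' assume h: "hist P r Y n = hist P r Y' n"
    then have "Q (r, Y) = Q (r, Y')" using hd unfolding hdet_def by blast
    moreover have "Ssum f g P r Y c n = Ssum f g P r Y' c n" for c using Ssum_eq[OF h] .
    ultimately show "(indicator A (r, Y) :: ennreal) = indicator A (r, Y')"
      by (simp add: A_def indicator_def)
  qed
  have "ennreal (exp (- L)) * emeasure ?Pm {\<omega> \<in> space ?Pm. Q \<omega> \<and> ?Sm \<omega> - ?Sj \<omega> < L}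
      = (\<integral>\<^sup>+\<omega>. ennreal (exp (- L)) * indicator A \<omega> \<partial>?Pm)"
    unfolding A_def by (subst nn_integral_cmult) (use Psim[unfolded A_def] in \<open>auto simp: indicator_integral[OF Am]\<close>)
  also have "\<dots> \<le> (\<integral>\<^sup>+\<omega>. indicator A \<omega> * Xk f g P m j n n \<omega> \<partial>?Pm)"
  proof (rule nn_integral_mono_AE)
    show "AE \<omega> in ?Pm. ennreal (exp (- L)) * indicator A \<omega> \<le> indicator A \<omega> * Xk f g P m j n n \<omega>"
      using good_AE
    proof eventually_elim
      case (elim \<omega>)
      show ?case
      proof (cases "\<omega> \<in> A")
        case True
        then have "exp (- L) \<le> exp (?Sj \<omega> - ?Sm \<omega>)" by (simp add: A_def)
        then show ?thesis using True by (simp add: Xk_exp[OF elim] ennreal_leI)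
      next
        case False then show ?thesis by simp
      qed
    qed
  qed
  also have "\<dots> = (\<integral>\<^sup>+\<omega>. indicator A \<omega> \<partial>?Pj)"
    by (rule change_measure[OF jm Psim hdA selm, symmetric])
  also have "\<dots> = emeasure ?Pj {\<omega> \<in> space ?Pj. Q \<omega> \<and> ?Sm \<omega> - ?Sj \<omega> < L}"
    unfolding A_def by (rule indicator_integral[OF Am])
  also have "\<dots> \<le> emeasure ?Pj {\<omega> \<in> space ?Pj. Q \<omega>}"
    by (rule emeasure_mono[OF _ Qs]) auto
  finally have ineq: "ennreal (exp (- L)) * emeasure ?Pm {\<omega> \<in> space ?Pm. Q \<omega> \<and> ?Sm \<omega> - ?Sj \<omega> < L}
      \<le> emeasure ?Pj {\<omega> \<in> space ?Pj. Q \<omega>}" .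
  have one: "ennreal (exp L) * ennreal (exp (- L)) = 1"
    by (simp add: ennreal_mult[symmetric] exp_minus)
  have "emeasure ?Pm {\<omega> \<in> space ?Pm. Q \<omega> \<and> ?Sm \<omega> - ?Sj \<omega> < L} =
      ennreal (exp L) * (ennreal (exp (- L)) * emeasure ?Pm {\<omega> \<in> space ?Pm. Q \<omega> \<and> ?Sm \<omega> - ?Sj \<omega> < L})"
    by (simp add: mult.assoc[symmetric] one)
  also have "\<dots> \<le> ennreal (exp L) * emeasure ?Pj {\<omega> \<in> space ?Pj. Q \<omega>}"
    by (rule mult_left_mono[OF ineq]) simp
  finally show ?thesis .
qed

end



lemma tau_eqI:
  assumes "stp P r (hist P r Y n)" "\<forall>k<n. \<not> stp P r (hist P r Y k)"
  shows "tau P r Y = n"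
  unfolding tau_def
proof (rule Least_equality)
  show "stp P r (hist P r Y n)" by fact
  show "n \<le> y" if "stp P r (hist P r Y y)" for y
    using assms(2) that not_le by blast
qed

lemma tau_stops:
  assumes "stops P r Y"
  shows "stp P r (hist P r Y (tau P r Y))" "\<forall>k<tau P r Y. \<not> stp P r (hist P r Y k)"
proof -
  obtain n where "stp P r (hist P r Y n)" using assms unfolding stops_def by blast
  then show "stp P r (hist P r Y (tau P r Y))" unfolding tau_def by (rule LeastI)
  show "\<forall>k<tau P r Y. \<not> stp P r (hist P r Y k)" unfolding tau_def using not_less_Least by blast
qed

lemma tau_nostop:
  assumes "\<not> stops P r Y"
  shows "tau P r Y = (THE x::nat. False)"
proof -
  have "\<forall>n. \<not> stp P r (hist P r Y n)" using assms unfolding stops_def by auto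
  then show ?thesis unfolding tau_def Least_def by simp
qed

lemma decision_iff:
  "(decision P r Y \<noteq> j) \<longleftrightarrow>
     (\<exists>n. stp P r (hist P r Y n) \<and> (\<forall>k<n. \<not> stp P r (hist P r Y k)) \<and> dec P r (hist P r Y n) \<noteq> j) \<or>
     ((\<forall>n. \<not> stp P r (hist P r Y n)) \<and> dec P r (hist P r Y (THE x::nat. False)) \<noteq> j)"
proof (cases "stops P r Y")
  case True
  then have "\<not> (\<forall>n. \<not> stp P r (hist P r Y n))" unfolding stops_def by auto
  moreover have "(\<exists>n. stp P r (hist P r Y n) \<and> (\<forall>k<n. \<not> stp P r (hist P r Y k)) \<and> dec P r (hist P r Y n) \<noteq> j)
        \<longleftrightarrow> decision P r Y \<noteq> j"
  proof
    assume "\<exists>n. stp P r (hist P r Y n) \<and> (\<forall>k<n. \<not> stp P r (hist P r Y k)) \<and> dec P r (hist P r Y n) \<noteq> j"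
    then obtain n where n: "stp P r (hist P r Y n)" "\<forall>k<n. \<not> stp P r (hist P r Y k)" "dec P r (hist P r Y n) \<noteq> j"
      by blast
    then show "decision P r Y \<noteq> j" unfolding decision_def using tau_eqI[OF n(1,2)] by simp
  next
    assume "decision P r Y \<noteq> j"
    then show "\<exists>n. stp P r (hist P r Y n) \<and> (\<forall>k<n. \<not> stp P r (hist P r Y k)) \<and> dec P r (hist P r Y n) \<noteq> j"
      using tau_stops[OF True] unfolding decision_def by blast
  qed
  ultimately show ?thesis by blast
next
  case False
  then have "\<forall>n. \<not> stp P r (hist P r Y n)" unfolding stops_def by auto
  then show ?thesis unfolding decision_def using tau_nostop[OF False] by auto
qed

context FG begin

lemma bound_c:
  fixes P :: "('r, 'a) policy" and L :: real
  assumes M2: "2 \<le> M" and mM: "m \<in> {1..M}"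
    and selm: "\<And>k \<sigma>. (\<lambda>\<omega>. sel P (fst \<omega>) (hist P (fst \<omega>) (snd \<omega>) k)) \<in> Om R \<mu> f g \<sigma> \<rightarrow>\<^sub>M count_space UNIV"
    and stpm: "\<And>k \<sigma>. (\<lambda>\<omega>. stp P (fst \<omega>) (hist P (fst \<omega>) (snd \<omega>) k)) \<in> Om R \<mu> f g \<sigma> \<rightarrow>\<^sub>M count_space UNIV"
    and decm: "\<And>k \<sigma>. (\<lambda>\<omega>. dec P (fst \<omega>) (hist P (fst \<omega>) (snd \<omega>) k)) \<in> Om R \<mu> f g \<sigma> \<rightarrow>\<^sub>M count_space UNIV"
    and stAE: "AE \<omega> in Om R \<mu> f g (\<lambda>i. snd i = m). stops P (fst \<omega>) (snd \<omega>)"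
  shows "measure (Om R \<mu> f g (\<lambda>i. snd i = m))
            {\<omega> \<in> space (Om R \<mu> f g (\<lambda>i. snd i = m)).
               DeltaS M f g P (fst \<omega>) (snd \<omega>) m (tau P (fst \<omega>) (snd \<omega>)) < L}
     \<le> measure (Om R \<mu> f g (\<lambda>i. snd i = m)) {\<omega> \<in> space (Om R \<mu> f g (\<lambda>i. snd i = m)). decision P (fst \<omega>) (snd \<omega>) \<noteq> m}
       + (\<Sum>j\<in>{1..M}-{m}. exp L * measure (Om R \<mu> f g (\<lambda>i. snd i = j)) {\<omega> \<in> space (Om R \<mu> f g (\<lambda>i. snd i = j)). decision P (fst \<omega>) (snd \<omega>) \<noteq> j})"
proof -
  let ?O = "\<lambda>j. Om R \<mu> f g (\<lambda>i. snd i = j)"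
  let ?Pm = "?O m"
  let ?J = "{1..M}-{m}"
  let ?S = "\<lambda>\<omega> c n. Ssum f g P (fst \<omega>) (snd \<omega>) c n"
  let ?stp = "\<lambda>\<omega> n. stp P (fst \<omega>) (hist P (fst \<omega>) (snd \<omega>) n)"
  let ?dec = "\<lambda>\<omega> n. dec P (fst \<omega>) (hist P (fst \<omega>) (snd \<omega>) n)"
  define Q where "Q = (\<lambda>n \<omega>. ?stp \<omega> n \<and> (\<forall>k<n. \<not> ?stp \<omega> k) \<and> ?dec \<omega> n = m)"
  interpret Pm: prob_space ?Pm unfolding Om_def
    by (intro prob_space_pair Rp PiM_prob)
  have probO: "prob_space (?O j)" for j unfolding Om_def by (intro prob_space_pair Rp PiM_prob)
  note [measurable] = stpm decm
  have Qm: "Measurable.pred (Om R \<mu> f g \<sigma>) (Q n)" for n \<sigma> unfolding Q_def by measurable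
  have Qhd: "hdet P n (Q n)" for n
    unfolding hdet_def Q_def
  proof (intro allI impI)
    fix r Y Y' assume h: "hist P r Y n = hist P r Y' n"
    have "hist P r Y k = hist P r Y' k" if "k \<le> n" for k using hist_eq_le[OF h that] .
    then show "(stp P (fst (r, Y)) (hist P (fst (r, Y)) (snd (r, Y)) n) \<and> (\<forall>k<n. \<not> stp P (fst (r, Y)) (hist P (fst (r, Y)) (snd (r, Y)) k)) \<and>
            dec P (fst (r, Y)) (hist P (fst (r, Y)) (snd (r, Y)) n) = m) =
           (stp P (fst (r, Y')) (hist P (fst (r, Y')) (snd (r, Y')) n) \<and> (\<forall>k<n. \<not> stp P (fst (r, Y')) (hist P (fst (r, Y')) (snd (r, Y')) k)) \<and>
            dec P (fst (r, Y')) (hist P (fst (r, Y')) (snd (r, Y')) n) = m)"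
      by simp
  qed
  have Quniq: "n = n'" if "Q n \<omega>" "Q n' \<omega>" for n n' \<omega>
    using that unfolding Q_def by (metis linorder_neqE_nat)
  have Qdec: "decision P (fst \<omega>) (snd \<omega>) = m" if "Q n \<omega>" for n \<omega>
    using that tau_eqI[of P "fst \<omega>" "snd \<omega>" n] unfolding Q_def decision_def by simp
  have decsets: "{\<omega> \<in> space (Om R \<mu> f g \<sigma>). decision P (fst \<omega>) (snd \<omega>) \<noteq> j} \<in> sets (Om R \<mu> f g \<sigma>)" for j \<sigma>
    unfolding decision_iff by measurable
  have spO: "space (?O j) = space ?Pm" for j by (rule space_Om)
  define U where "U = (\<lambda>j. {\<omega> \<in> space ?Pm. \<exists>n. Q n \<omega> \<and> ?S \<omega> m n - ?S \<omega> j n < L})"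
  have Ssm: "(\<lambda>\<omega>. ?S \<omega> c n) \<in> borel_measurable (Om R \<mu> f g \<sigma>)" for c n \<sigma>
    by (rule Ssum_meas[OF selm])
  have Um: "U j \<in> sets ?Pm" for j
  proof -
    note [measurable] = Ssm Qm
    show ?thesis unfolding U_def by measurable
  qed
  have Ubound: "emeasure ?Pm (U j) \<le> ennreal (exp L) * ennreal (measure (?O j) {\<omega> \<in> space (?O j). decision P (fst \<omega>) (snd \<omega>) \<noteq> j})"
    if j: "j \<in> ?J" for j
  proof -
    interpret Pj: prob_space "?O j" by (rule probO)
    have jm: "j \<noteq> m" using j by simp
    define A where "A = (\<lambda>n. {\<omega> \<in> space ?Pm. Q n \<omega> \<and> ?S \<omega> m n - ?S \<omega> j n < L})"
    define B where "B = (\<lambda>n. {\<omega> \<in> space (?O j). Q n \<omega>})"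
    have Am: "range A \<subseteq> sets ?Pm"
    proof -
      note [measurable] = Ssm Qm
      show ?thesis unfolding A_def by auto
    qed
    have Bm: "range B \<subseteq> sets (?O j)"
    proof -
      note [measurable] = Qm
      show ?thesis unfolding B_def by auto
    qed
    have dA: "disjoint_family A" unfolding disjoint_family_on_def A_def using Quniq by blast
    have dB: "disjoint_family B" unfolding disjoint_family_on_def B_def using Quniq by blast
    have "emeasure ?Pm (U j) = emeasure ?Pm (\<Union>n. A n)"
      by (rule arg_cong[where f="emeasure ?Pm"]) (auto simp: U_def A_def)
    also have "\<dots> = (\<Sum>n. emeasure ?Pm (A n))" by (rule suminf_emeasure[OF Am dA, symmetric])
    also have "\<dots> \<le> (\<Sum>n. ennreal (exp L) * emeasure (?O j) (B n))"
    proof (rule suminf_le)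
      fix n show "emeasure ?Pm (A n) \<le> ennreal (exp L) * emeasure (?O j) (B n)"
        unfolding A_def B_def by (rule event_bound[OF jm selm Qm Qhd])
    qed auto
    also have "\<dots> = ennreal (exp L) * emeasure (?O j) (\<Union>n. B n)"
      by (simp add: suminf_emeasure[OF Bm dB])
    also have "\<dots> \<le> ennreal (exp L) * emeasure (?O j) {\<omega> \<in> space (?O j). decision P (fst \<omega>) (snd \<omega>) \<noteq> j}"
    proof (rule mult_left_mono)
      show "emeasure (?O j) (\<Union>n. B n) \<le> emeasure (?O j) {\<omega> \<in> space (?O j). decision P (fst \<omega>) (snd \<omega>) \<noteq> j}"
        using jm by (intro emeasure_mono[OF _ decsets]) (auto simp: B_def dest!: Qdec)
    qed simp
    also have "\<dots> = ennreal (exp L) * ennreal (measure (?O j) {\<omega> \<in> space (?O j). decision P (fst \<omega>) (snd \<omega>) \<noteq> j})"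
      by (simp add: Pj.emeasure_eq_measure)
    finally show ?thesis .
  qed
  define N where "N = {\<omega> \<in> space ?Pm. \<not> (\<exists>n. ?stp \<omega> n)}"
  define Dm where "Dm = {\<omega> \<in> space ?Pm. decision P (fst \<omega>) (snd \<omega>) \<noteq> m}"
  have Nm: "N \<in> sets ?Pm" unfolding N_def by measurable
  have N0: "emeasure ?Pm N = 0"
  proof -
    have "AE \<omega> in ?Pm. \<exists>n. ?stp \<omega> n" using stAE unfolding stops_def by simp
    then show ?thesis unfolding N_def by (subst (asm) AE_iff_measurable[OF _ refl]) (use Nm[unfolded N_def] in auto)
  qed
  have Dmm: "Dm \<in> sets ?Pm" unfolding Dm_def by (rule decsets)
  have fJ: "finite ?J" by simp
  have cover: "{\<omega> \<in> space ?Pm. DeltaS M f g P (fst \<omega>) (snd \<omega>) m (tau P (fst \<omega>) (snd \<omega>)) < L}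
      \<subseteq> N \<union> Dm \<union> (\<Union>j\<in>?J. U j)"
  proof
    fix \<omega> assume w: "\<omega> \<in> {\<omega> \<in> space ?Pm. DeltaS M f g P (fst \<omega>) (snd \<omega>) m (tau P (fst \<omega>) (snd \<omega>)) < L}"
    show "\<omega> \<in> N \<union> Dm \<union> (\<Union>j\<in>?J. U j)"
    proof (cases "stops P (fst \<omega>) (snd \<omega>) \<and> decision P (fst \<omega>) (snd \<omega>) = m")
      case False
      then show ?thesis using w unfolding N_def Dm_def stops_def by auto
    next
      case True
      let ?n = "tau P (fst \<omega>) (snd \<omega>)"
      have Qn: "Q ?n \<omega>" using tau_stops[of P "fst \<omega>" "snd \<omega>"] True unfolding Q_def decision_def by simp
      have Jne: "?J \<noteq> {}"
      proof -
        have "(if m = 1 then 2 else 1) \<in> ?J" using M2 mM by auto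
        then show ?thesis by blast
      qed
      have "Min ((\<lambda>j. ?S \<omega> m ?n - ?S \<omega> j ?n) ` ?J) < L"
        using w unfolding DeltaS_def by simp
      then have "\<exists>a \<in> (\<lambda>j. ?S \<omega> m ?n - ?S \<omega> j ?n) ` ?J. a < L"
        using Min_less_iff[of "(\<lambda>j. ?S \<omega> m ?n - ?S \<omega> j ?n) ` ?J" L] Jne fJ by blast
      then obtain j where j: "j \<in> ?J" "?S \<omega> m ?n - ?S \<omega> j ?n < L"
        by blast
      then have "\<omega> \<in> U j" using Qn w unfolding U_def by auto
      then show ?thesis using j by blast
    qed
  qed
  let ?X = "measure ?Pm Dm + (\<Sum>j\<in>?J. exp L * measure (?O j) {\<omega> \<in> space (?O j). decision P (fst \<omega>) (snd \<omega>) \<noteq> j})"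
  have "emeasure ?Pm {\<omega> \<in> space ?Pm. DeltaS M f g P (fst \<omega>) (snd \<omega>) m (tau P (fst \<omega>) (snd \<omega>)) < L}
      \<le> emeasure ?Pm (N \<union> Dm \<union> (\<Union>j\<in>?J. U j))"
    by (rule emeasure_mono[OF cover]) (use Nm Dmm Um fJ in auto)
  also have "\<dots> \<le> emeasure ?Pm (N \<union> Dm) + emeasure ?Pm (\<Union>j\<in>?J. U j)"
    by (rule emeasure_subadditive) (use Nm Dmm Um fJ in auto)
  also have "\<dots> \<le> (emeasure ?Pm N + emeasure ?Pm Dm) + (\<Sum>j\<in>?J. emeasure ?Pm (U j))"
    by (intro add_mono emeasure_subadditive emeasure_subadditive_finite) (use Nm Dmm Um fJ in auto)
  also have "\<dots> \<le> (0 + ennreal (measure ?Pm Dm)) + (\<Sum>j\<in>?J. ennreal (exp L) * ennreal (measure (?O j) {\<omega> \<in> space (?O j). decision P (fst \<omega>) (snd \<omega>) \<noteq> j}))"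
    by (intro add_mono sum_mono Ubound) (simp_all add: N0 Pm.emeasure_eq_measure[of Dm])
  also have "\<dots> = ennreal ?X"
  proof -
    have s: "(\<Sum>j\<in>?J. ennreal (exp L) * ennreal (measure (?O j) {\<omega> \<in> space (?O j). decision P (fst \<omega>) (snd \<omega>) \<noteq> j}))
        = ennreal (\<Sum>j\<in>?J. exp L * measure (?O j) {\<omega> \<in> space (?O j). decision P (fst \<omega>) (snd \<omega>) \<noteq> j})"
      by (simp add: ennreal_mult'[symmetric])
    show ?thesis unfolding s by (simp add: sum_nonneg)
  qed
  finally have le: "ennreal (measure ?Pm {\<omega> \<in> space ?Pm. DeltaS M f g P (fst \<omega>) (snd \<omega>) m (tau P (fst \<omega>) (snd \<omega>)) < L}) \<le> ennreal ?X"
    by (simp add: Pm.emeasure_eq_measure)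
  have "0 \<le> ?X" by (simp add: sum_nonneg)
  then show ?thesis using le unfolding Dm_def by (simp add: ennreal_le_iff)
qed

end



lemma powr_aux:
  fixes c \<epsilon> :: real
  assumes "0 < c" "c < 1" "\<epsilon> < 1"
  shows "exp (- (1 - \<epsilon>) * ln c) * (- c * ln c) = - (c powr \<epsilon>) * ln c"
proof -
  have "exp (- (1 - \<epsilon>) * ln c) = c powr (\<epsilon> - 1)"
    using assms by (simp add: powr_def algebra_simps)
  moreover have "c powr (\<epsilon> - 1) * c = c powr \<epsilon>"
    using assms by (simp add: powr_add[symmetric] powr_diff)
  ultimately show ?thesis by (simp add: algebra_simps)
qed

lemma c_le_powr:
  fixes c \<epsilon> :: real
  assumes "0 < c" "c < 1" "0 < \<epsilon>" "\<epsilon> < 1"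
  shows "c \<le> c powr \<epsilon>"
proof -
  have "c powr 1 \<le> c powr \<epsilon>" using assms by (intro powr_mono') auto
  then show ?thesis using assms by simp
qed

theorem lemma1:
  fixes M K :: nat and \<mu> :: "'a measure" and f g :: "'a \<Rightarrow> real"
    and R :: "real \<Rightarrow> 'r measure" and \<Gamma> :: "real \<Rightarrow> ('r, 'a) policy"
    and \<epsilon> :: real and m :: nat
  assumes "2 \<le> M" and "1 \<le> K" and "K \<le> M"
    and "f \<in> borel_measurable \<mu>" and "g \<in> borel_measurable \<mu>"
    and "\<forall>x\<in>space \<mu>. 0 \<le> f x" and "\<forall>x\<in>space \<mu>. 0 \<le> g x"
    and "prob_space (density \<mu> (\<lambda>x. ennreal (f x)))"
    and "prob_space (density \<mu> (\<lambda>x. ennreal (g x)))"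
    and "AE x in \<mu>. (f x = 0 \<longleftrightarrow> g x = 0)"
    and "integrable \<mu> (\<lambda>x. g x * ln (g x / f x))"
    and "0 < (\<integral>x. g x * ln (g x / f x) \<partial>\<mu>)"
    and "integrable \<mu> (\<lambda>x. f x * ln (f x / g x))"
    and "0 < (\<integral>x. f x * ln (f x / g x) \<partial>\<mu>)"
    and "\<forall>c\<in>{0<..<1}. prob_space (R c)"
    and "\<forall>c\<in>{0<..<1}. admissible M K (R c) \<mu> f g (\<Gamma> c)"
    and "\<forall>c\<in>{0<..<1}. \<forall>j\<in>{1..M}.
           AE \<omega> in hyp_space (R c) \<mu> f g j. stops (\<Gamma> c) (fst \<omega>) (snd \<omega>)"
    and "\<forall>j\<in>{1..M}. (\<lambda>c. err_prob (R c) \<mu> f g (\<Gamma> c) j) \<in> O[at_right 0](\<lambda>c. - c * ln c)"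
    and "0 < \<epsilon>" and "\<epsilon> < 1"
    and "m \<in> {1..M}"
  shows "(\<lambda>c. measure (hyp_space (R c) \<mu> f g m)
            {\<omega> \<in> space (hyp_space (R c) \<mu> f g m).
               DeltaS M f g (\<Gamma> c) (fst \<omega>) (snd \<omega>) m (tau (\<Gamma> c) (fst \<omega>) (snd \<omega>))
                 < - (1 - \<epsilon>) * ln c})
         \<in> O[at_right 0](\<lambda>c. - (c powr \<epsilon>) * ln c)"
proof -
  note A = assms
  let ?J = "{1..M}-{m}"
  let ?al = "\<lambda>j c. err_prob (R c) \<mu> f g (\<Gamma> c) j"
  let ?L = "\<lambda>c::real. - (1 - \<epsilon>) * ln c"
  let ?meas = "\<lambda>c. measure (hyp_space (R c) \<mu> f g m)
            {\<omega> \<in> space (hyp_space (R c) \<mu> f g m).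
               DeltaS M f g (\<Gamma> c) (fst \<omega>) (snd \<omega>) m (tau (\<Gamma> c) (fst \<omega>) (snd \<omega>)) < ?L c}"
  define h where "h = (\<lambda>c. ?al m c + (\<Sum>j\<in>?J. exp (?L c) * ?al j c))"
  have bound: "0 \<le> ?meas c \<and> ?meas c \<le> h c" if c: "c \<in> {0<..<1}" for c
  proof -
    have Rc: "prob_space (R c)" using A(15) c by blast
    interpret FG \<mu> f g "R c"
      by (rule FG.intro[OF A(4) A(5) A(6) A(7) A(8) A(9) A(10) Rc])
    have adm: "admissible M K (R c) \<mu> f g (\<Gamma> c)" using A(16) c by blast
    have mm: "m \<in> {1..M}" by fact
    have cs: "measurable (hyp_space (R c) \<mu> f g m) (count_space UNIV) = measurable (Om (R c) \<mu> f g \<sigma>) (count_space UNIV)" for \<sigma>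
      unfolding hyp_space_Om by (rule measurable_cong_sets[OF sets_Om refl])
    have admm: "\<forall>n. (\<lambda>\<omega>. sel (\<Gamma> c) (fst \<omega>) (hist (\<Gamma> c) (fst \<omega>) (snd \<omega>) n)) \<in> hyp_space (R c) \<mu> f g m \<rightarrow>\<^sub>M count_space UNIV \<and>
        (\<lambda>\<omega>. stp (\<Gamma> c) (fst \<omega>) (hist (\<Gamma> c) (fst \<omega>) (snd \<omega>) n)) \<in> hyp_space (R c) \<mu> f g m \<rightarrow>\<^sub>M count_space UNIV \<and>
        (\<lambda>\<omega>. dec (\<Gamma> c) (fst \<omega>) (hist (\<Gamma> c) (fst \<omega>) (snd \<omega>) n)) \<in> hyp_space (R c) \<mu> f g m \<rightarrow>\<^sub>M count_space UNIV"
      using adm mm unfolding admissible_def by blast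
    have selm: "(\<lambda>\<omega>. sel (\<Gamma> c) (fst \<omega>) (hist (\<Gamma> c) (fst \<omega>) (snd \<omega>) k)) \<in> Om (R c) \<mu> f g \<sigma> \<rightarrow>\<^sub>M count_space UNIV" for k \<sigma>
    proof -
      have "(\<lambda>\<omega>. sel (\<Gamma> c) (fst \<omega>) (hist (\<Gamma> c) (fst \<omega>) (snd \<omega>) k)) \<in> hyp_space (R c) \<mu> f g m \<rightarrow>\<^sub>M count_space UNIV"
        using admm by blast
      then show ?thesis by (simp add: cs[of \<sigma>])
    qed
    have stpm: "(\<lambda>\<omega>. stp (\<Gamma> c) (fst \<omega>) (hist (\<Gamma> c) (fst \<omega>) (snd \<omega>) k)) \<in> Om (R c) \<mu> f g \<sigma> \<rightarrow>\<^sub>M count_space UNIV" for k \<sigma>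
    proof -
      have "(\<lambda>\<omega>. stp (\<Gamma> c) (fst \<omega>) (hist (\<Gamma> c) (fst \<omega>) (snd \<omega>) k)) \<in> hyp_space (R c) \<mu> f g m \<rightarrow>\<^sub>M count_space UNIV"
        using admm by blast
      then show ?thesis by (simp add: cs[of \<sigma>])
    qed
    have decm: "(\<lambda>\<omega>. dec (\<Gamma> c) (fst \<omega>) (hist (\<Gamma> c) (fst \<omega>) (snd \<omega>) k)) \<in> Om (R c) \<mu> f g \<sigma> \<rightarrow>\<^sub>M count_space UNIV" for k \<sigma>
    proof -
      have "(\<lambda>\<omega>. dec (\<Gamma> c) (fst \<omega>) (hist (\<Gamma> c) (fst \<omega>) (snd \<omega>) k)) \<in> hyp_space (R c) \<mu> f g m \<rightarrow>\<^sub>M count_space UNIV"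
        using admm by blast
      then show ?thesis by (simp add: cs[of \<sigma>])
    qed
    have stAE: "AE \<omega> in Om (R c) \<mu> f g (\<lambda>i. snd i = m). stops (\<Gamma> c) (fst \<omega>) (snd \<omega>)"
      using A(17) c mm unfolding hyp_space_Om by blast
    have "?meas c \<le> h c"
      using bound_c[OF A(1) mm selm stpm decm stAE, of "?L c"]
      unfolding h_def err_prob_def hyp_space_Om .
    then show ?thesis by simp
  qed
  have ev01: "eventually (\<lambda>c. c \<in> {0<..<1}) (at_right (0::real))"
    unfolding eventually_at_right_field by (intro exI[of _ 1]) auto
  have m1: "?meas \<in> O[at_right 0](h)"
  proof (rule bigoI[where c=1])
    show "eventually (\<lambda>c. norm (?meas c) \<le> 1 * norm (h c)) (at_right 0)"
      using ev01 by eventually_elim (use bound in force)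
  qed
  have t1: "(\<lambda>c. - c * ln c) \<in> O[at_right 0](\<lambda>c. - (c powr \<epsilon>) * ln c)"
  proof (rule bigoI[where c=1])
    show "eventually (\<lambda>c. norm (- c * ln c) \<le> 1 * norm (- (c powr \<epsilon>) * ln c)) (at_right 0)"
      using ev01
    proof eventually_elim
      case (elim c)
      then have "c \<le> c powr \<epsilon>" using A(19) A(20) by (intro c_le_powr) auto
      then show ?case using elim by (auto simp: abs_mult intro!: mult_right_mono)
    qed
  qed
  have t2: "(\<lambda>c. exp (?L c) * (- c * ln c)) \<in> O[at_right 0](\<lambda>c. - (c powr \<epsilon>) * ln c)"
  proof (rule bigoI[where c=1])
    show "eventually (\<lambda>c. norm (exp (?L c) * (- c * ln c)) \<le> 1 * norm (- (c powr \<epsilon>) * ln c)) (at_right 0)"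
      using ev01
    proof eventually_elim
      case (elim c)
      have eq: "exp (?L c) * (- c * ln c) = - (c powr \<epsilon>) * ln c" using elim A(20) by (intro powr_aux) auto
      show ?case unfolding eq by simp
    qed
  qed
  have alO: "?al j \<in> O[at_right 0](\<lambda>c. - c * ln c)" if "j \<in> {1..M}" for j
    using A(18) that by blast
  have h1: "?al m \<in> O[at_right 0](\<lambda>c. - (c powr \<epsilon>) * ln c)"
    using landau_o.big_trans[OF alO[OF A(21)] t1] .
  have h2: "(\<lambda>c. \<Sum>j\<in>?J. exp (?L c) * ?al j c) \<in> O[at_right 0](\<lambda>c. - (c powr \<epsilon>) * ln c)"
  proof (rule big_sum_in_bigo)
    fix j assume j: "j \<in> ?J"
    have "(\<lambda>c. exp (?L c) * ?al j c) \<in> O[at_right 0](\<lambda>c. exp (?L c) * (- c * ln c))"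
      using alO j by (intro landau_o.big.mult_left) auto
    then show "(\<lambda>c. exp (?L c) * ?al j c) \<in> O[at_right 0](\<lambda>c. - (c powr \<epsilon>) * ln c)"
      using t2 by (rule landau_o.big_trans)
  qed
  have "h \<in> O[at_right 0](\<lambda>c. - (c powr \<epsilon>) * ln c)"
    unfolding h_def by (rule sum_in_bigo(1)[OF h1 h2])
  then show ?thesis using m1 by (intro landau_o.big_trans[OF m1])
qed



end
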